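(* Let $W$ be a finite-dimensional real vector space with a Lorentzian inner product and let $W=W_1\oplus W_2$ be an orthogonal direct sum with $W_1$ time-like; write $u=u^T+u^\perp$ accordingly. Let $V,\tilde V$ be space-like subspaces of $W$ of the same dimension $m$. If there is a linear isometry $T\colon W\to W$ preserving $W_1$ and $W_2$ with $T(V)=\tilde V$, then for any orthonormal bases $\{\xi_1,\dots,\xi_m\}$ of $V$ and $\{\tilde\xi_1,\dots,\tilde\xi_m\}$ of $\tilde V$ the Gram matrices $(\langle\xi_i^T,\xi_j^T\rangle)$ and $(\langle\tilde\xi_i^T,\tilde\xi_j^T\rangle)$ (equivalently $(\langle\xi_i^\perp,\xi_j^\perp\rangle)$ and $(\langle\tilde\xi_i^\perp,\tilde\xi_j^\perp\rangle)$) have the same eigenvalues counted with multiplicities. Conversely, if there exist orthonormal bases $\{\xi_i\}$ of $V$ and $\{\tilde\xi_i\}$ of $\tilde V$ such that (i) the subspaces spanned by $\{\xi_1^T,\dots,\xi_m^T\}$ and by $\{\tilde\xi_1^T,\dots,\tilde\xi_m^T\}$ are either both degenerate of dimension $m$ or both nondegenerate, and (ii) the Gram matrices $(\langle\xi_i^T,\xi_j^T\rangle)$ and $(\langle\tilde\xi_i^T,\tilde\xi_j^T\rangle)$ (equivalently the $\perp$-ones) have the same eigenvalues counted with multiplicities, then there is a linear isometry $T\colon W\to W$ preserving $W_1$ and $W_2$ with $T(V)=\tilde V$. *)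

theory Defs
  imports "HOL-Analysis.Analysis" "Jordan_Normal_Form.Char_Poly"
begin

text \<open>Index 1: there is a time-like vector, and every subspace on which the form is
  negative definite has dimension at most 1.\<close>
definition lorentzian :: "('a::euclidean_space \<Rightarrow> 'a \<Rightarrow> real) \<Rightarrow> bool" where
  "lorentzian g \<longleftrightarrow> bilinear g \<and> (\<forall>x y. g x y = g y x)
     \<and> (\<forall>x. (\<forall>y. g x y = 0) \<longrightarrow> x = 0)
     \<and> (\<exists>e. g e e < 0)
     \<and> (\<forall>S. subspace S \<and> (\<forall>x\<in>S. x \<noteq> 0 \<longrightarrow> g x x < 0) \<longrightarrow> dim S \<le> 1)"

definition orth_direct_sum :: "('a::euclidean_space \<Rightarrow> 'a \<Rightarrow> real) \<Rightarrow> 'a set \<Rightarrow> 'a set \<Rightarrow> bool" where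
  "orth_direct_sum g W1 W2 \<longleftrightarrow> subspace W1 \<and> subspace W2 \<and> W1 \<inter> W2 = {0}
     \<and> (\<forall>u. \<exists>a\<in>W1. \<exists>b\<in>W2. u = a + b)
     \<and> (\<forall>a\<in>W1. \<forall>b\<in>W2. g a b = 0)"

definition timelike_subspace :: "('a::real_vector \<Rightarrow> 'a \<Rightarrow> real) \<Rightarrow> 'a set \<Rightarrow> bool" where
  "timelike_subspace g S \<longleftrightarrow> subspace S \<and> (\<exists>v\<in>S. g v v < 0)"

definition spacelike_subspace :: "('a::real_vector \<Rightarrow> 'a \<Rightarrow> real) \<Rightarrow> 'a set \<Rightarrow> bool" where
  "spacelike_subspace g S \<longleftrightarrow> subspace S \<and> (\<forall>v\<in>S. v \<noteq> 0 \<longrightarrow> g v v > 0)"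

definition degenerate_subspace :: "('a::real_vector \<Rightarrow> 'a \<Rightarrow> real) \<Rightarrow> 'a set \<Rightarrow> bool" where
  "degenerate_subspace g S \<longleftrightarrow> (\<exists>x\<in>S. x \<noteq> 0 \<and> (\<forall>y\<in>S. g x y = 0))"

definition proj1 :: "'a::real_vector set \<Rightarrow> 'a set \<Rightarrow> 'a \<Rightarrow> 'a" where
  "proj1 W1 W2 u = (THE a. a \<in> W1 \<and> u - a \<in> W2)"

definition proj2 :: "'a::real_vector set \<Rightarrow> 'a set \<Rightarrow> 'a \<Rightarrow> 'a" where
  "proj2 W1 W2 u = (THE b. b \<in> W2 \<and> u - b \<in> W1)"

definition adapted_isometry :: "('a::real_vector \<Rightarrow> 'a \<Rightarrow> real) \<Rightarrow> 'a set \<Rightarrow> 'a set \<Rightarrow> ('a \<Rightarrow> 'a) \<Rightarrow> bool" where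
  "adapted_isometry g W1 W2 T \<longleftrightarrow> linear T \<and> (\<forall>x y. g (T x) (T y) = g x y)
     \<and> T ` W1 = W1 \<and> T ` W2 = W2"

definition orthonormal_basis :: "('a::real_vector \<Rightarrow> 'a \<Rightarrow> real) \<Rightarrow> 'a set \<Rightarrow> nat \<Rightarrow> (nat \<Rightarrow> 'a) \<Rightarrow> bool" where
  "orthonormal_basis g V m xi \<longleftrightarrow> (\<forall>i<m. xi i \<in> V)
     \<and> (\<forall>i<m. \<forall>j<m. g (xi i) (xi j) = (if i = j then 1 else 0))
     \<and> span (xi ` {..<m}) = V"

definition gram :: "('a \<Rightarrow> 'a \<Rightarrow> real) \<Rightarrow> nat \<Rightarrow> (nat \<Rightarrow> 'a) \<Rightarrow> real mat" where
  "gram g m f = mat m m (\<lambda>(i, j). g (f i) (f j))"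

definition eigen_mult :: "real mat \<Rightarrow> real \<Rightarrow> nat" where
  "eigen_mult A lam = order lam (char_poly A)"

definition same_eigenvalues :: "real mat \<Rightarrow> real mat \<Rightarrow> bool" where
  "same_eigenvalues A B \<longleftrightarrow> (\<forall>lam. eigen_mult A lam = eigen_mult B lam)"

end

theory Submission
  imports Defs
begin


section \<open>Bilinear form basics\<close>

lemma bl_lin_l: "bilinear g \<Longrightarrow> linear (\<lambda>x. g x y)"
  by (simp add: bilinear_def)
lemma bl_lin_r: "bilinear g \<Longrightarrow> linear (\<lambda>y. g x y)"
  by (simp add: bilinear_def)

lemma bl_sum_l: assumes "bilinear g" shows "g (\<Sum>i\<in>I. f i) y = (\<Sum>i\<in>I. g (f i) y)"
proof - have "linear (\<lambda>x. g x y)" using assms by (rule bl_lin_l) from linear_sum[OF this] show ?thesis by simp qed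
lemma bl_sum_r: assumes "bilinear g" shows "g y (\<Sum>i\<in>I. f i) = (\<Sum>i\<in>I. g y (f i))"
proof - have "linear (\<lambda>x. g y x)" using assms by (rule bl_lin_r) from linear_sum[OF this] show ?thesis by simp qed
lemma bl_scale_l: assumes "bilinear g" shows "g (c *\<^sub>R x) y = c * g x y"
proof - have "linear (\<lambda>x. g x y)" using assms by (rule bl_lin_l) from linear_scale[OF this] show ?thesis by simp qed
lemma bl_scale_r: assumes "bilinear g" shows "g y (c *\<^sub>R x) = c * g y x"
proof - have "linear (\<lambda>x. g y x)" using assms by (rule bl_lin_r) from linear_scale[OF this] show ?thesis by simp qed
lemma bl_add_l: assumes "bilinear g" shows "g (x + z) y = g x y + g z y"
proof - have "linear (\<lambda>x. g x y)" using assms by (rule bl_lin_l) from linear_add[OF this] show ?thesis by simp qed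
lemma bl_add_r: assumes "bilinear g" shows "g y (x + z) = g y x + g y z"
proof - have "linear (\<lambda>x. g y x)" using assms by (rule bl_lin_r) from linear_add[OF this] show ?thesis by simp qed
lemma bl_diff_l: assumes "bilinear g" shows "g (x - z) y = g x y - g z y"
proof - have "linear (\<lambda>x. g x y)" using assms by (rule bl_lin_l) from linear_diff[OF this] show ?thesis by simp qed
lemma bl_diff_r: assumes "bilinear g" shows "g y (x - z) = g y x - g y z"
proof - have "linear (\<lambda>x. g y x)" using assms by (rule bl_lin_r) from linear_diff[OF this] show ?thesis by simp qed
lemma bl_zero_l: assumes "bilinear g" shows "g 0 y = 0"
proof - have "linear (\<lambda>x. g x y)" using assms by (rule bl_lin_l) from linear_0[OF this] show ?thesis by simp qed
lemma bl_zero_r: assumes "bilinear g" shows "g y 0 = 0"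
proof - have "linear (\<lambda>x. g y x)" using assms by (rule bl_lin_r) from linear_0[OF this] show ?thesis by simp qed
lemma bl_neg_l: assumes "bilinear g" shows "g (- x) y = - g x y"
proof - have "linear (\<lambda>x. g x y)" using assms by (rule bl_lin_l) from linear_neg[OF this] show ?thesis by simp qed
lemma bl_neg_r: assumes "bilinear g" shows "g y (- x) = - g y x"
proof - have "linear (\<lambda>x. g y x)" using assms by (rule bl_lin_r) from linear_neg[OF this] show ?thesis by simp qed

lemmas bl_simps = bl_sum_l bl_sum_r bl_scale_l bl_scale_r bl_add_l bl_add_r
  bl_diff_l bl_diff_r bl_zero_l bl_zero_r bl_neg_l bl_neg_r

lemma bl_span_orth:
  fixes g :: "'a::real_vector \<Rightarrow> 'b::real_vector \<Rightarrow> real"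
  assumes "bilinear g" "x \<in> span S" "\<And>s. s \<in> S \<Longrightarrow> g s y = 0"
  shows "g x y = 0"
  using assms(2)
proof (induction rule: span_induct_alt)
  case base then show ?case using assms(1) by (simp add: bl_simps)
next
  case (step c s x) then show ?case using assms(1,3) bl_scale_l[OF assms(1), of c s y] by (simp add: bl_add_l)
qed

section \<open>Projections\<close>

lemma ods_ex1:
  assumes "orth_direct_sum g W1 W2"
  shows "\<exists>!a. a \<in> W1 \<and> u - a \<in> W2"
proof -
  from assms obtain a b where ab: "a \<in> W1" "b \<in> W2" "u = a + b"
    unfolding orth_direct_sum_def by blast
  have s1: "subspace W1" and s2: "subspace W2" and i: "W1 \<inter> W2 = {0}"
    using assms unfolding orth_direct_sum_def by auto
  show ?thesis
  proof (rule ex1I[of _ a])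
    show "a \<in> W1 \<and> u - a \<in> W2" using ab by simp
    fix a' assume a': "a' \<in> W1 \<and> u - a' \<in> W2"
    have "a - a' \<in> W1" using ab a' s1 by (simp add: subspace_diff)
    moreover have "a - a' = (u - a') - (u - a)" by simp
    hence "a - a' \<in> W2" using ab a' s2 by (metis subspace_diff add_diff_cancel_left')
    ultimately have "a - a' = 0" using i by blast
    thus "a' = a" by simp
  qed
qed

lemma proj1_prop:
  assumes "orth_direct_sum g W1 W2"
  shows "proj1 W1 W2 u \<in> W1 \<and> u - proj1 W1 W2 u \<in> W2"
  unfolding proj1_def using theI'[OF ods_ex1[OF assms]] .

lemma proj1_unique:
  assumes "orth_direct_sum g W1 W2" "a \<in> W1" "u - a \<in> W2"
  shows "proj1 W1 W2 u = a"
  using ods_ex1[OF assms(1), of u] proj1_prop[OF assms(1), of u] assms(2,3) by blast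

lemma proj2_eq:
  assumes "orth_direct_sum g W1 W2"
  shows "proj2 W1 W2 u = u - proj1 W1 W2 u"
proof -
  have s1: "subspace W1" and s2: "subspace W2" and i: "W1 \<inter> W2 = {0}"
    using assms unfolding orth_direct_sum_def by auto
  let ?b = "u - proj1 W1 W2 u"
  have P: "?b \<in> W2 \<and> u - ?b \<in> W1" using proj1_prop[OF assms] by simp
  show ?thesis unfolding proj2_def
  proof (rule the_equality)
    show "?b \<in> W2 \<and> u - ?b \<in> W1" by fact
    fix b assume b: "b \<in> W2 \<and> u - b \<in> W1"
    have "b - ?b \<in> W2" using b P s2 by (simp add: subspace_diff)
    moreover have "b - ?b = (u - ?b) - (u - b)" by simp
    hence "b - ?b \<in> W1" using b P s1 by (metis subspace_diff)
    ultimately have "b - ?b = 0" using i by blast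
    thus "b = ?b" by simp
  qed
qed

lemma proj_decomp:
  assumes "orth_direct_sum g W1 W2"
  shows "proj1 W1 W2 u \<in> W1" "proj2 W1 W2 u \<in> W2" "u = proj1 W1 W2 u + proj2 W1 W2 u"
  using proj1_prop[OF assms] proj2_eq[OF assms] by auto

lemma proj_unique2:
  assumes "orth_direct_sum g W1 W2" "a \<in> W1" "b \<in> W2"
  shows "proj1 W1 W2 (a + b) = a" "proj2 W1 W2 (a + b) = b"
  using proj1_unique[OF assms(1,2), of "a+b"] assms(3) proj2_eq[OF assms(1)] by auto

lemma ods_subspaces:
  assumes "orth_direct_sum g W1 W2"
  shows "subspace W1" "subspace W2" "W1 \<inter> W2 = {0}" "\<And>a b. a \<in> W1 \<Longrightarrow> b \<in> W2 \<Longrightarrow> g a b = 0"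
  using assms unfolding orth_direct_sum_def by auto

lemma proj1_W1: "orth_direct_sum g W1 W2 \<Longrightarrow> a \<in> W1 \<Longrightarrow> proj1 W1 W2 a = a"
  using proj_unique2(1)[of g W1 W2 a 0] ods_subspaces(2)[of g W1 W2] by (simp add: subspace_0)
lemma proj2_W1: "orth_direct_sum g W1 W2 \<Longrightarrow> a \<in> W1 \<Longrightarrow> proj2 W1 W2 a = 0"
  using proj_unique2(2)[of g W1 W2 a 0] ods_subspaces(2)[of g W1 W2] by (simp add: subspace_0)
lemma proj1_W2: "orth_direct_sum g W1 W2 \<Longrightarrow> b \<in> W2 \<Longrightarrow> proj1 W1 W2 b = 0"
  using proj_unique2(1)[of g W1 W2 0 b] ods_subspaces(1)[of g W1 W2] by (simp add: subspace_0)
lemma proj2_W2: "orth_direct_sum g W1 W2 \<Longrightarrow> b \<in> W2 \<Longrightarrow> proj2 W1 W2 b = b"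
  using proj_unique2(2)[of g W1 W2 0 b] ods_subspaces(1)[of g W1 W2] by (simp add: subspace_0)

lemma proj1_linear:
  assumes "orth_direct_sum g W1 W2"
  shows "linear (proj1 W1 W2)"
proof (rule linearI)
  note d = proj_decomp[OF assms] and s = ods_subspaces[OF assms]
  fix x y :: 'a
  have "x + y = (proj1 W1 W2 x + proj1 W1 W2 y) + (proj2 W1 W2 x + proj2 W1 W2 y)"
    using d(3)[of x] d(3)[of y] by (simp add: algebra_simps)
  then show "proj1 W1 W2 (x + y) = proj1 W1 W2 x + proj1 W1 W2 y"
    using proj_unique2(1)[OF assms, of "proj1 W1 W2 x + proj1 W1 W2 y" "proj2 W1 W2 x + proj2 W1 W2 y"]
      d s by (simp add: subspace_add)
next
  note d = proj_decomp[OF assms] and s = ods_subspaces[OF assms]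
  fix c and x :: 'a
  have "c *\<^sub>R x = c *\<^sub>R proj1 W1 W2 x + c *\<^sub>R proj2 W1 W2 x"
    using d(3)[of x] by (metis scaleR_right_distrib)
  then show "proj1 W1 W2 (c *\<^sub>R x) = c *\<^sub>R proj1 W1 W2 x"
    using proj_unique2(1)[OF assms, of "c *\<^sub>R proj1 W1 W2 x" "c *\<^sub>R proj2 W1 W2 x"]
      d s by (simp add: subspace_scale)
qed

lemma proj2_linear:
  assumes "orth_direct_sum g W1 W2"
  shows "linear (proj2 W1 W2)"
proof -
  have "proj2 W1 W2 = (\<lambda>u. u - proj1 W1 W2 u)" using proj2_eq[OF assms] by auto
  thus ?thesis using proj1_linear[OF assms] by (simp add: linear_compose_sub linear_id[unfolded id_def])
qed

lemma g_decomp: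
  assumes "orth_direct_sum g W1 W2" "bilinear g" "\<forall>x y. g x y = g y x"
  shows "g x y = g (proj1 W1 W2 x) (proj1 W1 W2 y) + g (proj2 W1 W2 x) (proj2 W1 W2 y)"
proof -
  note d = proj_decomp[OF assms(1)] and s = ods_subspaces[OF assms(1)]
  let ?a = "proj1 W1 W2 x" and ?b = "proj2 W1 W2 x" and ?a' = "proj1 W1 W2 y" and ?b' = "proj2 W1 W2 y"
  have "g x y = g (?a + ?b) (?a' + ?b')" using d(3)[of x] d(3)[of y] by simp
  also have "\<dots> = g ?a ?a' + g ?a ?b' + g ?b ?a' + g ?b ?b'"
    using assms(2) by (simp add: bl_simps)
  also have "g ?a ?b' = 0" using s(4) d by blast
  also have "g ?b ?a' = 0" using s(4) d assms(3) by metis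
  finally show ?thesis by simp
qed


definition sON :: "('a::real_vector \<Rightarrow> 'a \<Rightarrow> real) \<Rightarrow> 'a set \<Rightarrow> bool" where
  "sON g D \<longleftrightarrow> finite D \<and> (\<forall>a\<in>D. \<forall>b\<in>D. a \<noteq> b \<longrightarrow> g a b = 0) \<and> (\<forall>a\<in>D. g a a = 1 \<or> g a a = -1)"

lemma sON_sq: "sON g D \<Longrightarrow> c \<in> D \<Longrightarrow> g c c * g c c = 1"
  unfolding sON_def by auto

lemma sON_coeff:
  assumes "bilinear g" "sON g D" "c \<in> D"
  shows "g (\<Sum>v\<in>D. u v *\<^sub>R v) c = u c * g c c"
proof -
  have f: "finite D" using assms(2) unfolding sON_def by auto
  have "g (\<Sum>v\<in>D. u v *\<^sub>R v) c = (\<Sum>v\<in>D. u v * g v c)"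
    using assms(1) by (simp add: bl_sum_l bl_scale_l)
  also have "\<dots> = u c * g c c + (\<Sum>v\<in>D - {c}. u v * g v c)"
    using f assms(3) by (simp add: sum.remove)
  also have "(\<Sum>v\<in>D - {c}. u v * g v c) = 0"
    using assms(2,3) unfolding sON_def by (intro sum.neutral) auto
  finally show ?thesis by simp
qed

lemma sON_expand:
  assumes "bilinear g" "sON g D" "x \<in> span D"
  shows "x = (\<Sum>c\<in>D. (g c c * g x c) *\<^sub>R c)"
proof -
  have f: "finite D" using assms(2) unfolding sON_def by auto
  obtain u where u: "x = (\<Sum>v\<in>D. u v *\<^sub>R v)" using assms(3) span_finite[OF f] by auto
  have "\<And>c. c \<in> D \<Longrightarrow> g c c * g x c = u c"
    using sON_coeff[OF assms(1,2)] sON_sq[OF assms(2)] u by (metis mult.assoc mult.commute mult.right_neutral)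
  then show ?thesis using u by (metis (no_types, lifting) sum.cong)
qed

lemma sON_indep:
  assumes "bilinear g" "sON g D"
  shows "independent D"
proof (rule independent_if_scalars_zero)
  show "finite D" using assms(2) unfolding sON_def by auto
  fix f x assume "(\<Sum>x\<in>D. f x *\<^sub>R x) = 0" "x \<in> D"
  then have "f x * g x x = 0" using sON_coeff[OF assms, of x f] assms(1) by (simp add: bl_zero_l)
  then show "f x = 0" using assms(2) \<open>x \<in> D\<close> unfolding sON_def by auto
qed

lemma sON_subset: "sON g D \<Longrightarrow> D' \<subseteq> D \<Longrightarrow> sON g D'"
  unfolding sON_def by (auto intro: finite_subset)

section \<open>Indexed orthonormal bases\<close>

lemma onb_inj:
  assumes "orthonormal_basis g V m xi"
  shows "inj_on xi {..<m}"
proof (rule inj_onI)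
  fix i j assume "i \<in> {..<m}" "j \<in> {..<m}" "xi i = xi j"
  then show "i = j" using assms unfolding orthonormal_basis_def
    by (metis lessThan_iff zero_neq_one)
qed

lemma onb_sON:
  assumes "orthonormal_basis g V m xi"
  shows "sON g (xi ` {..<m})"
  using assms onb_inj[OF assms] unfolding orthonormal_basis_def sON_def inj_on_def by auto

lemma onb_expand:
  assumes "bilinear g" "orthonormal_basis g V m xi" "x \<in> V"
  shows "x = (\<Sum>j<m. g x (xi j) *\<^sub>R xi j)"
proof -
  have "x \<in> span (xi ` {..<m})" using assms(2,3) unfolding orthonormal_basis_def by simp
  from sON_expand[OF assms(1) onb_sON[OF assms(2)] this]
  have "x = (\<Sum>c\<in>xi ` {..<m}. (g c c * g x c) *\<^sub>R c)" .
  also have "\<dots> = (\<Sum>j<m. (g (xi j) (xi j) * g x (xi j)) *\<^sub>R xi j)"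
    by (rule sum.reindex_cong[OF onb_inj[OF assms(2)]]) auto
  also have "\<dots> = (\<Sum>j<m. g x (xi j) *\<^sub>R xi j)"
    using assms(2) unfolding orthonormal_basis_def by (intro sum.cong) auto
  finally show ?thesis .
qed

lemma onb_in: "orthonormal_basis g V m xi \<Longrightarrow> i < m \<Longrightarrow> xi i \<in> V"
  unfolding orthonormal_basis_def by auto

lemma onb_g: "orthonormal_basis g V m xi \<Longrightarrow> i < m \<Longrightarrow> j < m \<Longrightarrow> g (xi i) (xi j) = (if i = j then 1 else 0)"
  unfolding orthonormal_basis_def by auto

section \<open>Similarity of Gram matrices\<close>

lemma bilinear_comp_linear:
  assumes "bilinear g" "linear P"
  shows "bilinear (\<lambda>x y. g (P x) (P y))"
  using assms unfolding bilinear_def by (auto intro: linear_compose[unfolded o_def])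

lemma gram_similar:
  fixes g h :: "'a::real_vector \<Rightarrow> 'a \<Rightarrow> real"
  assumes g: "bilinear g" "\<forall>x y. g x y = g y x" and h: "bilinear h"
    and xi: "orthonormal_basis g V m xi" and eta: "orthonormal_basis g V m eta"
  shows "similar_mat (mat m m (\<lambda>(i,j). h (xi i) (xi j))) (mat m m (\<lambda>(i,j). h (eta i) (eta j)))"
proof -
  define Om where "Om = mat m m (\<lambda>(i,j). g (xi i) (eta j))"
  define A where "A = mat m m (\<lambda>(i,j). h (xi i) (xi j))"
  define B where "B = mat m m (\<lambda>(i,j). h (eta i) (eta j))"
  have exi: "\<And>i. i < m \<Longrightarrow> xi i = (\<Sum>j<m. g (xi i) (eta j) *\<^sub>R eta j)"
    using onb_expand[OF g(1) eta onb_in[OF xi]] by blast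
  have eeta: "\<And>j. j < m \<Longrightarrow> eta j = (\<Sum>i<m. g (eta j) (xi i) *\<^sub>R xi i)"
    using onb_expand[OF g(1) xi onb_in[OF eta]] by blast
  have OOt: "Om * transpose_mat Om = 1\<^sub>m m"
  proof (rule eq_matI)
    fix i k assume ik: "i < dim_row (1\<^sub>m m)" "k < dim_col (1\<^sub>m m)"
    have "(Om * transpose_mat Om) $$ (i,k) = (\<Sum>j<m. g (xi i) (eta j) * g (xi k) (eta j))"
      using ik by (simp add: Om_def scalar_prod_def atLeast0LessThan)
    also have "\<dots> = g (xi i) (\<Sum>j<m. g (xi k) (eta j) *\<^sub>R eta j)"
      using g(1) by (simp add: bl_sum_r bl_scale_r mult.commute)
    also have "\<dots> = g (xi i) (xi k)" using exi[of k] ik by simp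
    also have "\<dots> = 1\<^sub>m m $$ (i,k)" using onb_g[OF xi] ik by simp
    finally show "(Om * transpose_mat Om) $$ (i,k) = 1\<^sub>m m $$ (i,k)" .
  qed (auto simp: Om_def)
  have OtO: "transpose_mat Om * Om = 1\<^sub>m m"
  proof (rule eq_matI)
    fix j l assume jl: "j < dim_row (1\<^sub>m m)" "l < dim_col (1\<^sub>m m)"
    have "(transpose_mat Om * Om) $$ (j,l) = (\<Sum>i<m. g (xi i) (eta j) * g (xi i) (eta l))"
      using jl by (simp add: Om_def scalar_prod_def atLeast0LessThan)
    also have "\<dots> = (\<Sum>i<m. g (eta l) (xi i) * g (xi i) (eta j))"
      using g(2) by (simp add: mult.commute)
    also have "\<dots> = g (\<Sum>i<m. g (eta l) (xi i) *\<^sub>R xi i) (eta j)"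
      using g(1) by (simp add: bl_sum_l bl_scale_l)
    also have "\<dots> = g (eta l) (eta j)" using eeta[of l] jl by simp
    also have "\<dots> = 1\<^sub>m m $$ (j,l)" using onb_g[OF eta] jl by auto
    finally show "(transpose_mat Om * Om) $$ (j,l) = 1\<^sub>m m $$ (j,l)" .
  qed (auto simp: Om_def)
  have AOBO: "A = Om * B * transpose_mat Om"
  proof (rule eq_matI)
    fix i k assume ik: "i < dim_row (Om * B * transpose_mat Om)" "k < dim_col (Om * B * transpose_mat Om)"
    then have ik': "i < m" "k < m" by (auto simp: Om_def)
    have "(Om * B * transpose_mat Om) $$ (i,k) =
       (\<Sum>l<m. (\<Sum>j<m. g (xi i) (eta j) * h (eta j) (eta l)) * g (xi k) (eta l))"
      using ik' by (simp add: Om_def B_def scalar_prod_def atLeast0LessThan)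
    also have "\<dots> = (\<Sum>j<m. g (xi i) (eta j) * (\<Sum>l<m. g (xi k) (eta l) * h (eta j) (eta l)))"
    proof -
      have "(\<Sum>l<m. (\<Sum>j<m. g (xi i) (eta j) * h (eta j) (eta l)) * g (xi k) (eta l))
          = (\<Sum>l<m. \<Sum>j<m. g (xi i) (eta j) * (g (xi k) (eta l) * h (eta j) (eta l)))"
        by (intro sum.cong refl) (simp add: sum_distrib_left sum_distrib_right mult_ac)
      also have "\<dots> = (\<Sum>j<m. \<Sum>l<m. g (xi i) (eta j) * (g (xi k) (eta l) * h (eta j) (eta l)))"
        by (rule sum.swap)
      also have "\<dots> = (\<Sum>j<m. g (xi i) (eta j) * (\<Sum>l<m. g (xi k) (eta l) * h (eta j) (eta l)))"
        by (simp add: sum_distrib_left)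
      finally show ?thesis .
    qed
    also have "\<dots> = (\<Sum>j<m. g (xi i) (eta j) * h (eta j) (\<Sum>l<m. g (xi k) (eta l) *\<^sub>R eta l))"
      using h by (simp add: bl_sum_r bl_scale_r)
    also have "\<dots> = h (\<Sum>j<m. g (xi i) (eta j) *\<^sub>R eta j) (\<Sum>l<m. g (xi k) (eta l) *\<^sub>R eta l)"
      using h by (simp add: bl_sum_l bl_scale_l)
    also have "\<dots> = h (xi i) (xi k)" using exi ik' by simp
    also have "\<dots> = A $$ (i,k)" using ik' by (simp add: A_def)
    finally show "A $$ (i, k) = (Om * B * transpose_mat Om) $$ (i, k)" by simp
  qed (auto simp: Om_def A_def)
  have "similar_mat_wit A B Om (transpose_mat Om)"
    unfolding similar_mat_wit_def Let_def using OOt OtO AOBO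
    by (auto simp: A_def B_def Om_def)
  then show ?thesis unfolding similar_mat_def A_def B_def by blast
qed

lemma gram_char_poly_eq:
  fixes g h :: "'a::real_vector \<Rightarrow> 'a \<Rightarrow> real"
  assumes g: "bilinear g" "\<forall>x y. g x y = g y x" and P: "linear P"
    and xi: "orthonormal_basis g V m xi" and eta: "orthonormal_basis g V m eta"
  shows "char_poly (gram g m (\<lambda>i. P (xi i))) = char_poly (gram g m (\<lambda>i. P (eta i)))"
  unfolding gram_def
  by (rule char_poly_similar, rule gram_similar[OF g bilinear_comp_linear[OF g(1) P] xi eta])

section \<open>Forward direction\<close>

lemma onb_image:
  assumes "orthonormal_basis g V m xi" "linear T" "\<forall>x y. g (T x) (T y) = g x y"
  shows "orthonormal_basis g (T ` V) m (\<lambda>i. T (xi i))"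
proof -
  have "span ((\<lambda>i. T (xi i)) ` {..<m}) = T ` span (xi ` {..<m})"
    using linear_span_image[OF assms(2), of "xi ` {..<m}"] by (simp add: image_image)
  then show ?thesis using assms unfolding orthonormal_basis_def by auto
qed

lemma proj_commute:
  assumes "orth_direct_sum g W1 W2" "adapted_isometry g W1 W2 T"
  shows "proj1 W1 W2 (T x) = T (proj1 W1 W2 x)" "proj2 W1 W2 (T x) = T (proj2 W1 W2 x)"
proof -
  have lT: "linear T" and T1: "T ` W1 = W1" and T2: "T ` W2 = W2"
    using assms(2) unfolding adapted_isometry_def by auto
  note d = proj_decomp[OF assms(1)]
  have "T x = T (proj1 W1 W2 x) + T (proj2 W1 W2 x)"
    using d(3)[of x] linear_add[OF lT] by metis
  moreover have "T (proj1 W1 W2 x) \<in> W1" using d(1) T1 by blast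
  moreover have "T (proj2 W1 W2 x) \<in> W2" using d(2) T2 by blast
  ultimately show "proj1 W1 W2 (T x) = T (proj1 W1 W2 x)" "proj2 W1 W2 (T x) = T (proj2 W1 W2 x)"
    using proj_unique2[OF assms(1)] by metis+
qed

lemma forward:
  fixes g :: "'a::euclidean_space \<Rightarrow> 'a \<Rightarrow> real"
  assumes g: "bilinear g" "\<forall>x y. g x y = g y x" and ods: "orth_direct_sum g W1 W2"
    and T: "adapted_isometry g W1 W2 T" "T ` V = V'"
    and xi: "orthonormal_basis g V m xi" and xi': "orthonormal_basis g V' m xi'"
  shows "same_eigenvalues (gram g m (\<lambda>i. proj1 W1 W2 (xi i))) (gram g m (\<lambda>i. proj1 W1 W2 (xi' i)))
       \<and> same_eigenvalues (gram g m (\<lambda>i. proj2 W1 W2 (xi i))) (gram g m (\<lambda>i. proj2 W1 W2 (xi' i)))"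
proof -
  have lT: "linear T" and iso: "\<forall>x y. g (T x) (T y) = g x y"
    using T(1) unfolding adapted_isometry_def by auto
  have eta: "orthonormal_basis g V' m (\<lambda>i. T (xi i))"
    using onb_image[OF xi lT iso] T(2) by simp
  have e1: "gram g m (\<lambda>i. proj1 W1 W2 (xi i)) = gram g m (\<lambda>i. proj1 W1 W2 (T (xi i)))"
    unfolding gram_def proj_commute[OF ods T(1)] by (simp add: iso)
  have e2: "gram g m (\<lambda>i. proj2 W1 W2 (xi i)) = gram g m (\<lambda>i. proj2 W1 W2 (T (xi i)))"
    unfolding gram_def proj_commute[OF ods T(1)] by (simp add: iso)
  show ?thesis unfolding same_eigenvalues_def eigen_mult_def e1 e2
    using gram_char_poly_eq[OF g proj1_linear[OF ods] eta xi']
      gram_char_poly_eq[OF g proj2_linear[OF ods] eta xi'] by simp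
qed


lemma sON_quad:
  assumes g: "bilinear g" "\<forall>x y. g x y = g y x" and D: "sON g D" and z: "z \<in> span D"
  shows "g z z = (\<Sum>c\<in>D. g c c * (g z c)\<^sup>2)"
proof -
  have "g z z = g (\<Sum>c\<in>D. (g c c * g z c) *\<^sub>R c) z" using sON_expand[OF g(1) D z] by simp
  also have "\<dots> = (\<Sum>c\<in>D. g c c * g z c * g c z)" using g(1) by (simp add: bl_sum_l bl_scale_l)
  also have "\<dots> = (\<Sum>c\<in>D. g c c * (g z c)\<^sup>2)" using g(2) by (simp add: power2_eq_square mult.assoc)
  finally show ?thesis .
qed

lemma sON_zero:
  assumes g: "bilinear g" and D: "sON g D" and z: "z \<in> span D" and h: "\<forall>c\<in>D. g z c = 0"
  shows "z = 0"
  using sON_expand[OF g D z] h by simp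

lemma neg_card_le1:
  fixes g :: "'a::euclidean_space \<Rightarrow> 'a \<Rightarrow> real"
  assumes L: "lorentzian g" and D: "sON g D"
  shows "card {c\<in>D. g c c = -1} \<le> 1"
proof -
  have g: "bilinear g" "\<forall>x y. g x y = g y x" using L unfolding lorentzian_def by auto
  let ?N = "{c\<in>D. g c c = -1}"
  have N: "sON g ?N" using sON_subset[OF D] by auto
  have "\<forall>x\<in>span ?N. x \<noteq> 0 \<longrightarrow> g x x < 0"
  proof (intro ballI impI)
    fix x assume x: "x \<in> span ?N" "x \<noteq> 0"
    then obtain c where c: "c \<in> ?N" "g x c \<noteq> 0" using sON_zero[OF g(1) N x(1)] by blast
    have fin: "finite ?N" using N unfolding sON_def by auto
    have "g x x = (\<Sum>c\<in>?N. - (g x c)\<^sup>2)" using sON_quad[OF g N x(1)] by simp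
    also have "\<dots> < 0"
    proof -
      have "(\<Sum>d\<in>?N. (g x d)\<^sup>2) \<ge> (g x c)\<^sup>2"
        using member_le_sum[of c ?N "\<lambda>d. (g x d)\<^sup>2"] c fin by simp
      moreover have "(g x c)\<^sup>2 > 0" using c by simp
      ultimately have "(\<Sum>d\<in>?N. (g x d)\<^sup>2) > 0" by linarith
      then show ?thesis by (simp add: sum_negf)
    qed
    finally show "g x x < 0" .
  qed
  then have "dim (span ?N) \<le> 1" using L unfolding lorentzian_def by blast
  then show ?thesis using dim_span_eq_card_independent[OF sON_indep[OF g(1) N]] by simp
qed

lemma arith_pos:
  fixes a b :: real
  assumes "a \<noteq> 0"
  shows "\<exists>t. 2 * t * a + t\<^sup>2 * b > 0"
proof -
  define s where "s = \<bar>b\<bar> + 1"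
  have s: "s > 0" "\<bar>b\<bar> < s" unfolding s_def by auto
  define t where "t = a / s"
  have "a\<^sup>2 > 0" using assms by simp
  have "t\<^sup>2 * b \<ge> - (t\<^sup>2 * \<bar>b\<bar>)" using mult_left_mono[of "-\<bar>b\<bar>" b "t\<^sup>2"] by simp
  moreover have "t\<^sup>2 * \<bar>b\<bar> \<le> t\<^sup>2 * s" using s by (simp add: mult_left_mono)
  moreover have "t\<^sup>2 * s = a\<^sup>2 / s" using s unfolding t_def by (simp add: power2_eq_square)
  moreover have "2 * t * a = 2 * (a\<^sup>2 / s)" unfolding t_def by (simp add: power2_eq_square)
  moreover have "a\<^sup>2 / s > 0" using s \<open>a\<^sup>2 > 0\<close> by simp
  ultimately have "2 * t * a + t\<^sup>2 * b > 0" by linarith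
  then show ?thesis by blast
qed

lemma neg2:
  fixes g :: "'a::euclidean_space \<Rightarrow> 'a \<Rightarrow> real"
  assumes L: "lorentzian g" and e: "g e e < 0" and x: "g x x < 0" and ex: "g e x = 0"
  shows False
proof -
  have g: "bilinear g" "\<forall>x y. g x y = g y x" using L unfolding lorentzian_def by auto
  define u where "u = (1 / sqrt (- g e e)) *\<^sub>R e"
  define v where "v = (1 / sqrt (- g x x)) *\<^sub>R x"
  have sq: "(1 / sqrt a) * (1 / sqrt a) = 1 / a" if "a > 0" for a :: real
  proof -
    have "sqrt a * sqrt a = a" using that by simp
    then show ?thesis by (metis mult_1 times_divide_times_eq)
  qed
  have uu: "g u u = -1"
  proof -
    have "g u u = (1 / sqrt (- g e e)) * (1 / sqrt (- g e e)) * g e e"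
      unfolding u_def using g(1) by (simp add: bl_scale_l bl_scale_r)
    also have "\<dots> = g e e / (- g e e)" using sq[of "- g e e"] e by simp
    finally show ?thesis using e by simp
  qed
  have vv: "g v v = -1"
  proof -
    have "g v v = (1 / sqrt (- g x x)) * (1 / sqrt (- g x x)) * g x x"
      unfolding v_def using g(1) by (simp add: bl_scale_l bl_scale_r)
    also have "\<dots> = g x x / (- g x x)" using sq[of "- g x x"] x by simp
    finally show ?thesis using x by simp
  qed
  have uv: "g u v = 0" "g v u = 0" unfolding u_def v_def using g ex by (auto simp: bl_scale_l bl_scale_r)
  have "u \<noteq> v" using uu uv by auto
  then have D: "sON g {u, v}" unfolding sON_def using uu vv uv by auto
  have "{c\<in>{u,v}. g c c = -1} = {u, v}" using uu vv by auto
  then have "card {c\<in>{u,v}. g c c = -1} = 2" using \<open>u \<noteq> v\<close> by simp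
  then show False using neg_card_le1[OF L D] by simp
qed

lemma timelike_perp_pos:
  fixes g :: "'a::euclidean_space \<Rightarrow> 'a \<Rightarrow> real"
  assumes L: "lorentzian g" and e: "g e e < 0" and ex: "g e x = 0" and x0: "x \<noteq> 0"
  shows "g x x > 0"
proof (rule ccontr)
  assume "\<not> g x x > 0"
  have g: "bilinear g" "\<forall>x y. g x y = g y x" and nd: "\<forall>x. (\<forall>y. g x y = 0) \<longrightarrow> x = 0"
    using L unfolding lorentzian_def by auto
  show False
  proof (cases "g x x < 0")
    case True then show ?thesis using neg2[OF L e True ex] by simp
  next
    case False
    with \<open>\<not> g x x > 0\<close> have xx: "g x x = 0" by simp
    obtain y where y: "g x y \<noteq> 0" using nd x0 by blast
    define w where "w = y - (g e y / g e e) *\<^sub>R e"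
    have ew: "g e w = 0" unfolding w_def using g(1) e by (simp add: bl_diff_r bl_scale_r)
    have xw: "g x w = g x y" unfolding w_def using g ex by (simp add: bl_diff_r bl_scale_r)
    obtain t where t: "2 * t * (- g x w) + t\<^sup>2 * (- g w w) > 0" using arith_pos[of "- g x w" "- g w w"] xw y by auto
    define x' where "x' = x + t *\<^sub>R w"
    have "g x' x' = 2 * t * g x w + t\<^sup>2 * g w w" unfolding x'_def using g xx
      by (simp add: bl_add_l bl_add_r bl_scale_l bl_scale_r power2_eq_square algebra_simps)
    then have "g x' x' < 0" using t by simp
    moreover have "g e x' = 0" unfolding x'_def using g(1) ex ew by (simp add: bl_add_r bl_scale_r)
    ultimately show False using neg2[OF L e] by blast
  qed
qed

lemma two_null:
  fixes g :: "'a::euclidean_space \<Rightarrow> 'a \<Rightarrow> real"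
  assumes L: "lorentzian g" and n: "g n1 n1 = 0" "g n2 n2 = 0" "g n1 n2 = 0"
    and n10: "n1 \<noteq> 0" and n2: "n2 \<notin> span {n1}"
  shows False
proof -
  have g: "bilinear g" "\<forall>x y. g x y = g y x" and "\<exists>e. g e e < 0"
    using L unfolding lorentzian_def by auto
  then obtain e where e: "g e e < 0" by blast
  show False
  proof (cases "g n1 e = 0")
    case True
    have "g e n1 = 0" using True g(2) by metis
    then have "g n1 n1 > 0" by (rule timelike_perp_pos[OF L e _ n10])
    with n show False by simp
  next
    case False
    define x where "x = g n2 e *\<^sub>R n1 - g n1 e *\<^sub>R n2"
    have "x \<noteq> 0"
    proof
      assume "x = 0"
      then have "g n1 e *\<^sub>R n2 = g n2 e *\<^sub>R n1" unfolding x_def by simp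
      then have "(1 / g n1 e) *\<^sub>R (g n1 e *\<^sub>R n2) = (1 / g n1 e) *\<^sub>R (g n2 e *\<^sub>R n1)" by simp
      then have "n2 = (1 / g n1 e) *\<^sub>R (g n2 e *\<^sub>R n1)" using False by simp
      moreover have "(1 / g n1 e) *\<^sub>R (g n2 e *\<^sub>R n1) \<in> span {n1}"
        by (intro span_scale span_base) simp
      ultimately show False using n2 by simp
    qed
    moreover have "g e x = 0" unfolding x_def using g by (simp add: bl_diff_r bl_scale_r mult.commute)
    moreover have "g x x = 0" unfolding x_def using g n
      by (simp add: bl_diff_l bl_diff_r bl_scale_l bl_scale_r)
    ultimately show False using timelike_perp_pos[OF L e] by fastforce
  qed
qed


lemma perp_subspace:
  fixes g :: "'a::euclidean_space \<Rightarrow> 'a \<Rightarrow> real"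
  assumes "bilinear g" "subspace V"
  shows "subspace {y\<in>V. g u y = 0}"
proof -
  have "subspace {y. g u y = 0}" using linear_subspace_kernel[OF bl_lin_r[OF assms(1)]] by simp
  then have "subspace (V \<inter> {y. g u y = 0})" using subspace_inter[OF assms(2)] by blast
  moreover have "V \<inter> {y. g u y = 0} = {y\<in>V. g u y = 0}" by auto
  ultimately show ?thesis by simp
qed

lemma dim_perp_less:
  fixes g :: "'a::euclidean_space \<Rightarrow> 'a \<Rightarrow> real"
  assumes "bilinear g" "subspace V" "u \<in> V" "g u u \<noteq> 0"
  shows "dim {y\<in>V. g u y = 0} < dim V"
proof (rule dim_psubset)
  have s: "subspace {y\<in>V. g u y = 0}" by (rule perp_subspace[OF assms(1,2)])
  show "span {y\<in>V. g u y = 0} \<subset> span V"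
    unfolding span_eq_iff[THEN iffD2, OF s] span_eq_iff[THEN iffD2, OF assms(2)]
    using assms(3,4) by auto
qed

lemma insert_span:
  fixes g :: "'a::euclidean_space \<Rightarrow> 'a \<Rightarrow> real"
  assumes "bilinear g" "subspace V" "u \<in> V" "g u u \<noteq> 0" "span D0 = {y\<in>V. g u y = 0}"
  shows "V \<subseteq> span (insert u D0)"
proof
  fix v assume v: "v \<in> V"
  let ?k = "g u v / g u u"
  have "v - ?k *\<^sub>R u \<in> V" using v assms(2,3) by (simp add: subspace_diff subspace_scale)
  moreover have "g u (v - ?k *\<^sub>R u) = 0" using assms(1,4) by (simp add: bl_diff_r bl_scale_r)
  ultimately have "v - ?k *\<^sub>R u \<in> span D0" using assms(5) by simp
  then show "v \<in> span (insert u D0)" using span_breakdown_eq by blast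
qed

lemma spectral_set:
  fixes g h :: "'a::euclidean_space \<Rightarrow> 'a \<Rightarrow> real"
  assumes g: "bilinear g" "\<forall>x y. g x y = g y x" and h: "bilinear h" "\<forall>x y. h x y = h y x"
  shows "subspace V \<Longrightarrow> (\<forall>v\<in>V. v \<noteq> 0 \<longrightarrow> g v v > 0) \<Longrightarrow>
    \<exists>D. D \<subseteq> V \<and> sON g D \<and> (\<forall>c\<in>D. g c c = 1) \<and> span D = V \<and> (\<forall>a\<in>D. \<forall>b\<in>D. a \<noteq> b \<longrightarrow> h a b = 0)"
proof (induction "dim V" arbitrary: V rule: less_induct)
  case less
  note sV = less.prems(1) and pos = less.prems(2)
  show ?case
  proof (cases "V = {0}")
    case True then show ?thesis by (intro exI[of _ "{}"]) (auto simp: sON_def)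
  next
    case False
    then obtain v where v: "v \<in> V" "v \<noteq> 0" using subspace_0[OF sV] by blast
    define K where "K = sphere (0::'a) 1 \<inter> V"
    have Kc: "compact K" unfolding K_def by (rule compact_Int_closed[OF compact_sphere closed_subspace[OF sV]])
    have vK: "(1 / norm v) *\<^sub>R v \<in> K" unfolding K_def using v sV by (simp add: subspace_scale)
    then have Kne: "K \<noteq> {}" by blast
    have Kpos: "\<forall>x\<in>K. g x x > 0" unfolding K_def using pos by auto
    define R where "R x = h x x / g x x" for x
    have ch: "continuous_on K (\<lambda>x. h x x)"
      using bilinear_continuous_on_compose[of K "\<lambda>x. x" "\<lambda>x. x" h] continuous_on_id h(1) by simp
    have cg: "continuous_on K (\<lambda>x. g x x)"
      using bilinear_continuous_on_compose[of K "\<lambda>x. x" "\<lambda>x. x" g] continuous_on_id g(1) by simp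
    have cont: "continuous_on K R" unfolding R_def
      by (rule continuous_on_divide[OF ch cg]) (use Kpos in fastforce)
    obtain x0 where x0: "x0 \<in> K" "\<forall>y\<in>K. R y \<le> R x0"
      using continuous_attains_sup[OF Kc Kne cont] by blast
    have x0V: "x0 \<in> V" and gx0: "g x0 x0 > 0" using x0(1) Kpos unfolding K_def by auto
    have Rscale: "R (c *\<^sub>R z) = R z" if "c \<noteq> 0" for c z
      unfolding R_def using that g(1) h(1) by (simp add: bl_scale_l bl_scale_r)
    have Rmax: "R z \<le> R x0" if "z \<in> V" "z \<noteq> 0" for z
    proof -
      have "(1 / norm z) *\<^sub>R z \<in> K" unfolding K_def using that sV by (simp add: subspace_scale)
      then have "R ((1 / norm z) *\<^sub>R z) \<le> R x0" using x0(2) by blast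
      then show ?thesis using Rscale[of "1 / norm z" z] that by simp
    qed
    have key: "h x0 y = 0" if y: "y \<in> V" "g x0 y = 0" for y
    proof (rule ccontr)
      assume a: "h x0 y \<noteq> 0"
      obtain t where t: "2 * t * h x0 y + t\<^sup>2 * (h y y - R x0 * g y y) > 0"
        using arith_pos[OF a] by blast
      define z where "z = x0 + t *\<^sub>R y"
      have zV: "z \<in> V" unfolding z_def using x0V y sV by (simp add: subspace_add subspace_scale)
      have gz: "g x0 z = g x0 x0" unfolding z_def using g(1) y by (simp add: bl_add_r bl_scale_r)
      then have z0: "z \<noteq> 0" using gx0 g(1) by (auto simp: bl_zero_r)
      have gzz: "g z z = g x0 x0 + t\<^sup>2 * g y y" unfolding z_def using g y
        by (simp add: bl_add_l bl_add_r bl_scale_l bl_scale_r power2_eq_square algebra_simps)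
      have hzz: "h z z = h x0 x0 + 2 * t * h x0 y + t\<^sup>2 * h y y" unfolding z_def using h
        by (simp add: bl_add_l bl_add_r bl_scale_l bl_scale_r power2_eq_square algebra_simps)
      have gzpos: "g z z > 0" using pos zV z0 by blast
      have "R z \<le> R x0" using Rmax[OF zV z0] .
      then have "h z z \<le> R x0 * g z z" unfolding R_def[of z] using gzpos by (simp add: divide_le_eq)
      moreover have "R x0 * g x0 x0 = h x0 x0" unfolding R_def using gx0 by simp
      ultimately have "2 * t * h x0 y + t\<^sup>2 * (h y y - R x0 * g y y) \<le> 0"
        unfolding hzz gzz by (simp add: algebra_simps)
      then show False using t by simp
    qed
    define u where "u = (1 / sqrt (g x0 x0)) *\<^sub>R x0"
    have sq: "(1 / sqrt a) * (1 / sqrt a) = 1 / a" if "a > 0" for a :: real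
    proof -
      have "sqrt a * sqrt a = a" using that by simp
      then show ?thesis by (metis mult_1 times_divide_times_eq)
    qed
    have uu: "g u u = 1"
    proof -
      have "g u u = (1 / sqrt (g x0 x0)) * (1 / sqrt (g x0 x0)) * g x0 x0"
        unfolding u_def using g(1) by (simp add: bl_scale_l bl_scale_r)
      also have "\<dots> = 1" using sq[of "g x0 x0"] gx0 by simp
      finally show ?thesis .
    qed
    have uV: "u \<in> V" unfolding u_def using x0V sV by (simp add: subspace_scale)
    define V0 where "V0 = {y\<in>V. g u y = 0}"
    have sV0: "subspace V0" unfolding V0_def by (rule perp_subspace[OF g(1) sV])
    have dV0: "dim V0 < dim V" unfolding V0_def using dim_perp_less[OF g(1) sV uV] uu by simp
    have pos0: "\<forall>v\<in>V0. v \<noteq> 0 \<longrightarrow> g v v > 0" using pos unfolding V0_def by auto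
    obtain D0 where D0: "D0 \<subseteq> V0" "sON g D0" "\<forall>c\<in>D0. g c c = 1" "span D0 = V0"
        "\<forall>a\<in>D0. \<forall>b\<in>D0. a \<noteq> b \<longrightarrow> h a b = 0"
      using less.hyps[OF dV0 sV0 pos0] by blast
    have ud: "g u d = 0" "g d u = 0" if "d \<in> D0" for d using that D0(1) g(2) unfolding V0_def by auto
    have hud: "h u d = 0" "h d u = 0" if "d \<in> D0" for d
    proof -
      have dV: "d \<in> V" and "g u d = 0" using that D0(1) unfolding V0_def by auto
      then have "(1 / sqrt (g x0 x0)) * g x0 d = 0" unfolding u_def using g(1) by (simp add: bl_scale_l)
      then have "g x0 d = 0" using gx0 by simp
      then have "h x0 d = 0" using key dV by blast
      then show "h u d = 0" unfolding u_def using h(1) by (simp add: bl_scale_l)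
      then show "h d u = 0" using h(2) by metis
    qed
    have uD0: "u \<notin> D0" using ud uu by fastforce
    show ?thesis
    proof (intro exI[of _ "insert u D0"] conjI)
      show "insert u D0 \<subseteq> V" using uV D0(1) unfolding V0_def by auto
      show "sON g (insert u D0)" using D0(2) ud uu unfolding sON_def by auto
      show "\<forall>c\<in>insert u D0. g c c = 1" using D0(3) uu by auto
      show "\<forall>a\<in>insert u D0. \<forall>b\<in>insert u D0. a \<noteq> b \<longrightarrow> h a b = 0" using D0(5) hud by auto
      show "span (insert u D0) = V"
      proof
        show "span (insert u D0) \<subseteq> V"
          using uV D0(1) sV unfolding V0_def by (intro span_minimal) auto
        show "V \<subseteq> span (insert u D0)" using insert_span[OF g(1) sV uV _ D0(4)[unfolded V0_def]] uu by simp
      qed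
    qed
  qed
qed

lemma gs_set:
  fixes g :: "'a::euclidean_space \<Rightarrow> 'a \<Rightarrow> real"
  assumes g: "bilinear g" "\<forall>x y. g x y = g y x"
  shows "subspace C \<Longrightarrow> (\<forall>x\<in>C. (\<forall>y\<in>C. g x y = 0) \<longrightarrow> x = 0) \<Longrightarrow>
    \<exists>B. B \<subseteq> C \<and> sON g B \<and> span B = C"
proof (induction "dim C" arbitrary: C rule: less_induct)
  case less
  note sC = less.prems(1) and nd = less.prems(2)
  show ?case
  proof (cases "C = {0}")
    case True then show ?thesis by (intro exI[of _ "{}"]) (auto simp: sON_def)
  next
    case False
    then obtain v where v: "v \<in> C" "v \<noteq> 0" using subspace_0[OF sC] by blast
    have "\<exists>x\<in>C. g x x \<noteq> 0"
    proof (rule ccontr)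
      assume "\<not> (\<exists>x\<in>C. g x x \<noteq> 0)"
      then have z: "\<forall>x\<in>C. g x x = 0" by blast
      have "\<forall>y\<in>C. g v y = 0"
      proof
        fix y assume y: "y \<in> C"
        have "v + y \<in> C" using v y sC by (simp add: subspace_add)
        then have "g (v + y) (v + y) = 0" using z by blast
        moreover have "g (v + y) (v + y) = g v v + 2 * g v y + g y y"
          using g by (simp add: bl_add_l bl_add_r)
        ultimately show "g v y = 0" using z v y by simp
      qed
      then show False using nd v by blast
    qed
    then obtain x where x: "x \<in> C" "g x x \<noteq> 0" by blast
    define u where "u = (1 / sqrt \<bar>g x x\<bar>) *\<^sub>R x"
    have sq: "(1 / sqrt a) * (1 / sqrt a) = 1 / a" if "a > 0" for a :: real
    proof -
      have "sqrt a * sqrt a = a" using that by simp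
      then show ?thesis by (metis mult_1 times_divide_times_eq)
    qed
    have uu: "g u u = 1 \<or> g u u = -1"
    proof -
      have "g u u = (1 / sqrt \<bar>g x x\<bar>) * (1 / sqrt \<bar>g x x\<bar>) * g x x"
        unfolding u_def using g(1) by (simp add: bl_scale_l bl_scale_r)
      also have "\<dots> = g x x / \<bar>g x x\<bar>" using sq[of "\<bar>g x x\<bar>"] x by simp
      finally show ?thesis using x(2) by (cases "g x x > 0") auto
    qed
    have uu0: "g u u \<noteq> 0" using uu by auto
    have uC: "u \<in> C" unfolding u_def using x sC by (simp add: subspace_scale)
    define C0 where "C0 = {y\<in>C. g u y = 0}"
    have sC0: "subspace C0" unfolding C0_def by (rule perp_subspace[OF g(1) sC])
    have dC0: "dim C0 < dim C" unfolding C0_def using dim_perp_less[OF g(1) sC uC uu0] by simp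
    have nd0: "\<forall>y\<in>C0. (\<forall>z\<in>C0. g y z = 0) \<longrightarrow> y = 0"
    proof (intro ballI impI)
      fix y assume y: "y \<in> C0" and yz: "\<forall>z\<in>C0. g y z = 0"
      have "\<forall>z\<in>C. g y z = 0"
      proof
        fix z assume z: "z \<in> C"
        let ?k = "g u z / g u u"
        have "z - ?k *\<^sub>R u \<in> C0" unfolding C0_def using z uC sC uu0 g(1)
          by (simp add: subspace_diff subspace_scale bl_diff_r bl_scale_r)
        then have "g y (z - ?k *\<^sub>R u) = 0" using yz by blast
        moreover have "g y u = 0" using y g(2) unfolding C0_def by auto
        ultimately show "g y z = 0" using g(1) by (simp add: bl_diff_r bl_scale_r)
      qed
      then show "y = 0" using nd y unfolding C0_def by auto
    qed
    obtain B0 where B0: "B0 \<subseteq> C0" "sON g B0" "span B0 = C0"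
      using less.hyps[OF dC0 sC0 nd0] by blast
    have ud: "g u d = 0" "g d u = 0" if "d \<in> B0" for d using that B0(1) g(2) unfolding C0_def by auto
    show ?thesis
    proof (intro exI[of _ "insert u B0"] conjI)
      show "insert u B0 \<subseteq> C" using uC B0(1) unfolding C0_def by auto
      show "sON g (insert u B0)" using B0(2) ud uu unfolding sON_def by auto
      show "span (insert u B0) = C"
      proof
        show "span (insert u B0) \<subseteq> C"
          using uC B0(1) sC unfolding C0_def by (intro span_minimal) auto
        show "C \<subseteq> span (insert u B0)" using insert_span[OF g(1) sC uC uu0 B0(3)[unfolded C0_def]] by simp
      qed
    qed
  qed
qed


lemma iso_bases:
  fixes g :: "'a::euclidean_space \<Rightarrow> 'a \<Rightarrow> real"
  assumes g: "bilinear g" "\<forall>x y. g x y = g y x"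
    and D: "sON g D" "span D = E" and D': "sON g D'" "span D' = E"
    and chi: "bij_betw ch D D'" "\<forall>c\<in>D. g (ch c) (ch c) = g c c"
  shows "\<exists>T. linear T \<and> (\<forall>x\<in>E. \<forall>y\<in>E. g (T x) (T y) = g x y) \<and> T ` E = E \<and> (\<forall>c\<in>D. T c = ch c)"
proof -
  define T where "T x = (\<Sum>c\<in>D. (g c c * g x c) *\<^sub>R ch c)" for x
  have finD: "finite D" using D(1) unfolding sON_def by auto
  have lin: "linear T"
  proof (rule linearI)
    fix x y show "T (x + y) = T x + T y"
      unfolding T_def using g(1) by (simp add: bl_add_l distrib_left scaleR_add_left sum.distrib)
  next
    fix r x show "T (r *\<^sub>R x) = r *\<^sub>R T x"
      unfolding T_def using g(1) by (simp add: bl_scale_l scaleR_sum_right mult_ac)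
  qed
  have inj: "inj_on ch D" and im: "ch ` D = D'" using chi(1) unfolding bij_betw_def by auto
  have cc: "g (ch c) (ch d) = (if c = d then g c c else 0)" if "c \<in> D" "d \<in> D" for c d
  proof (cases "c = d")
    case True then show ?thesis using chi(2) that by simp
  next
    case False
    then have "ch c \<noteq> ch d" using inj that by (auto dest: inj_onD)
    moreover have "ch c \<in> D'" "ch d \<in> D'" using im that by auto
    ultimately show ?thesis using D'(1) False unfolding sON_def by auto
  qed
  have gT: "g (T x) (ch d) = g x d" if "d \<in> D" for x d
  proof -
    have "g (T x) (ch d) = (\<Sum>c\<in>D. (g c c * g x c) * g (ch c) (ch d))"
      unfolding T_def using g(1) by (simp add: bl_sum_l bl_scale_l)
    also have "\<dots> = (\<Sum>c\<in>D. if c = d then (g d d * g x d) * g d d else 0)"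
      using cc that by (intro sum.cong) auto
    also have "\<dots> = (g d d * g x d) * g d d" using that finD by simp
    also have "\<dots> = g x d" using sON_sq[OF D(1) that] by (simp add: mult_ac)
    finally show ?thesis .
  qed
  have Tc: "T d = ch d" if "d \<in> D" for d
  proof -
    have "T d = (\<Sum>c\<in>D. if c = d then ch d else 0)"
      unfolding T_def
    proof (intro sum.cong refl)
      fix c assume c: "c \<in> D"
      show "(g c c * g d c) *\<^sub>R ch c = (if c = d then ch d else 0)"
        using sON_sq[OF D(1) c] D(1) c that unfolding sON_def by auto
    qed
    also have "\<dots> = ch d" using that finD by simp
    finally show ?thesis .
  qed
  have iso: "g (T x) (T y) = g x y" if "x \<in> E" "y \<in> E" for x y
  proof -
    have "g (T x) (T y) = (\<Sum>d\<in>D. (g d d * g y d) * g (T x) (ch d))"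
      unfolding T_def[of y] using g(1) by (simp add: bl_sum_r bl_scale_r)
    also have "\<dots> = (\<Sum>d\<in>D. (g d d * g y d) * g x d)" using gT by simp
    also have "\<dots> = g x (\<Sum>d\<in>D. (g d d * g y d) *\<^sub>R d)" using g(1) by (simp add: bl_sum_r bl_scale_r)
    also have "\<dots> = g x y" using sON_expand[OF g(1) D(1), of y] that D(2) by simp
    finally show ?thesis .
  qed
  have TE: "T ` E = E"
  proof
    show "T ` E \<subseteq> E"
    proof
      fix z assume "z \<in> T ` E"
      then obtain x where "z = T x" by blast
      moreover have "T x \<in> span D'" unfolding T_def
        using im by (intro span_sum span_scale span_base) auto
      ultimately show "z \<in> E" using D'(2) by simp
    qed
    have sub: "subspace (T ` E)" using linear_span_image[OF lin, of D] D(2) subspace_span by metis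
    have "D' \<subseteq> T ` E"
    proof
      fix z assume "z \<in> D'"
      then obtain c where c: "c \<in> D" "z = ch c" using im by blast
      then have "z = T c" using Tc by simp
      moreover have "c \<in> E" using c(1) D(2) span_base by blast
      ultimately show "z \<in> T ` E" by blast
    qed
    then show "E \<subseteq> T ` E" using span_minimal[OF _ sub] D'(2) by blast
  qed
  show ?thesis using lin iso TE Tc by blast
qed

lemma complete_sON:
  fixes g :: "'a::euclidean_space \<Rightarrow> 'a \<Rightarrow> real"
  assumes g: "bilinear g" "\<forall>x y. g x y = g y x"
    and sE: "subspace E" and nd: "\<forall>x\<in>E. (\<forall>y\<in>E. g x y = 0) \<longrightarrow> x = 0"
    and A: "A \<subseteq> E" "sON g A"
  shows "\<exists>B. A \<inter> B = {} \<and> sON g (A \<union> B) \<and> A \<union> B \<subseteq> E \<and> span (A \<union> B) = E"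
proof -
  define C where "C = {x\<in>E. \<forall>a\<in>A. g a x = 0}"
  have finA: "finite A" using A(2) unfolding sON_def by auto
  have sC: "subspace C" unfolding C_def subspace_def
    using sE g(1) by (auto simp: subspace_0 subspace_add subspace_scale bl_zero_r bl_add_r bl_scale_r)
  define p where "p y = (\<Sum>a\<in>A. (g a a * g y a) *\<^sub>R a)" for y
  have pA: "p y \<in> span A" for y unfolding p_def by (intro span_sum span_scale span_base)
  have pE: "p y \<in> E" for y using pA[of y] A(1) sE by (meson span_minimal subsetD)
  have yp: "y - p y \<in> C" if "y \<in> E" for y
  proof -
    have "g a' (y - p y) = 0" if a': "a' \<in> A" for a'
    proof -
      have "g a' (p y) = (\<Sum>a\<in>A. (g a a * g y a) * g a' a)"
        unfolding p_def using g(1) by (simp add: bl_sum_r bl_scale_r)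
      also have "\<dots> = (\<Sum>a\<in>A. if a = a' then g y a' else 0)"
      proof (intro sum.cong refl)
        fix a assume a: "a \<in> A"
        show "(g a a * g y a) * g a' a = (if a = a' then g y a' else 0)"
          using sON_sq[OF A(2) a] A(2) a a' unfolding sON_def by (auto simp: mult_ac)
      qed
      also have "\<dots> = g y a'" using a' finA by simp
      finally show ?thesis using g by (simp add: bl_diff_r)
    qed
    then show ?thesis unfolding C_def using that pE sE by (simp add: subspace_diff)
  qed
  have ndC: "\<forall>x\<in>C. (\<forall>y\<in>C. g x y = 0) \<longrightarrow> x = 0"
  proof (intro ballI impI)
    fix x assume x: "x \<in> C" and xy: "\<forall>y\<in>C. g x y = 0"
    have "g x y = 0" if y: "y \<in> E" for y
    proof -
      have "g x (y - p y) = 0" using xy yp[OF y] by blast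
      moreover have "g x (p y) = 0"
      proof -
        have "g x a = 0" if "a \<in> A" for a using x that g(2) unfolding C_def by auto
        then show ?thesis unfolding p_def using g(1) by (simp add: bl_sum_r bl_scale_r)
      qed
      ultimately show ?thesis using g(1) by (simp add: bl_diff_r)
    qed
    then show "x = 0" using nd x unfolding C_def by auto
  qed
  obtain B where B: "B \<subseteq> C" "sON g B" "span B = C" using gs_set[OF g sC ndC] by blast
  have BA: "g a b = 0" "g b a = 0" if "a \<in> A" "b \<in> B" for a b
    using that B(1) g(2) unfolding C_def by auto
  have disj: "A \<inter> B = {}"
  proof (rule ccontr)
    assume "A \<inter> B \<noteq> {}"
    then obtain a where "a \<in> A" "a \<in> B" by blast
    then show False using BA[of a a] A(2) unfolding sON_def by auto
  qed
  have "sON g (A \<union> B)" using A(2) B(2) BA unfolding sON_def by (auto simp: finite_Un)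
  moreover have "A \<union> B \<subseteq> E" using A(1) B(1) unfolding C_def by auto
  moreover have "span (A \<union> B) = E"
  proof
    show "span (A \<union> B) \<subseteq> E" using \<open>A \<union> B \<subseteq> E\<close> sE by (rule span_minimal)
    show "E \<subseteq> span (A \<union> B)"
    proof
      fix y assume y: "y \<in> E"
      have "p y \<in> span (A \<union> B)" using pA[of y] span_mono[of A "A \<union> B"] by blast
      moreover have "y - p y \<in> span (A \<union> B)" using yp[OF y] B(3) span_mono[of B "A \<union> B"] by blast
      ultimately have "p y + (y - p y) \<in> span (A \<union> B)" by (rule span_add)
      then show "y \<in> span (A \<union> B)" by simp
    qed
  qed
  ultimately show ?thesis using disj by blast
qed


lemma ext_set:
  fixes g :: "'a::euclidean_space \<Rightarrow> 'a \<Rightarrow> real"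
  assumes g: "bilinear g" "\<forall>x y. g x y = g y x"
    and sE: "subspace E" and nd: "\<forall>x\<in>E. (\<forall>y\<in>E. g x y = 0) \<longrightarrow> x = 0"
    and sig: "\<forall>B. B \<subseteq> E \<and> sON g B \<and> span B = E \<longrightarrow> card {b\<in>B. g b b = -1} = \<nu>"
    and A: "A \<subseteq> E" "sON g A" and A': "A' \<subseteq> E" "sON g A'"
    and phi: "bij_betw \<phi> A A'" "\<forall>a\<in>A. g (\<phi> a) (\<phi> a) = g a a"
  shows "\<exists>T. linear T \<and> (\<forall>x\<in>E. \<forall>y\<in>E. g (T x) (T y) = g x y) \<and> T ` E = E \<and> (\<forall>a\<in>A. T a = \<phi> a)"
proof -
  obtain B where B: "A \<inter> B = {}" "sON g (A \<union> B)" "A \<union> B \<subseteq> E" "span (A \<union> B) = E"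
    using complete_sON[OF g sE nd A] by blast
  obtain B' where B': "A' \<inter> B' = {}" "sON g (A' \<union> B')" "A' \<union> B' \<subseteq> E" "span (A' \<union> B') = E"
    using complete_sON[OF g sE nd A'] by blast
  have fin: "finite A" "finite B" "finite A'" "finite B'"
    using B(2) B'(2) unfolding sON_def by auto
  have "card (A \<union> B) = dim E"
    using basis_card_eq_dim[OF B(3) _ sON_indep[OF g(1) B(2)]] B(4) by simp
  moreover have "card (A' \<union> B') = dim E"
    using basis_card_eq_dim[OF B'(3) _ sON_indep[OF g(1) B'(2)]] B'(4) by simp
  moreover have "card A = card A'" using bij_betw_same_card[OF phi(1)] .
  ultimately have cB: "card B = card B'" using fin B(1) B'(1) by (simp add: card_Un_disjoint)
  define N where "N X = {x\<in>X. g x x = -1}" for X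
  define P where "P X = {x\<in>X. g x x = 1}" for X
  have "card {b\<in>A \<union> B. g b b = -1} = \<nu>" using sig B(2,3,4) by blast
  moreover have "card {b\<in>A' \<union> B'. g b b = -1} = \<nu>" using sig B'(2,3,4) by blast
  ultimately have nuAB: "card (N (A \<union> B)) = \<nu>" "card (N (A' \<union> B')) = \<nu>"
    unfolding N_def by blast+
  have NU: "N (X \<union> Y) = N X \<union> N Y" for X Y unfolding N_def by auto
  have finN: "finite (N X)" if "finite X" for X using that unfolding N_def by auto
  have finP: "finite (P X)" if "finite X" for X using that unfolding P_def by auto
  have "\<phi> ` N A = N A'"
  proof
    show "\<phi> ` N A \<subseteq> N A'" using phi bij_betwE[OF phi(1)] unfolding N_def by auto
    show "N A' \<subseteq> \<phi> ` N A"
    proof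
      fix a' assume "a' \<in> N A'"
      then obtain a where "a \<in> A" "a' = \<phi> a" "g a' a' = -1"
        using bij_betw_imp_surj_on[OF phi(1)] unfolding N_def by auto
      then show "a' \<in> \<phi> ` N A" using phi(2) unfolding N_def by auto
    qed
  qed
  then have "bij_betw \<phi> (N A) (N A')" using bij_betw_subset[OF phi(1)] unfolding N_def by auto
  then have cNA: "card (N A) = card (N A')" by (rule bij_betw_same_card)
  have "card (N A) + card (N B) = card (N A') + card (N B')"
    using nuAB unfolding NU using card_Un_disjoint[OF finN finN] fin B(1) B'(1) unfolding N_def
    by (metis (no_types, lifting) disjoint_iff mem_Collect_eq)
  then have cNB: "card (N B) = card (N B')" using cNA by simp
  have BNP: "B = N B \<union> P B" "B' = N B' \<union> P B'"
    using B(2) B'(2) unfolding N_def P_def sON_def by auto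
  have dNP: "N X \<inter> P X = {}" for X unfolding N_def P_def by auto
  have "card B = card (N B) + card (P B)" "card B' = card (N B') + card (P B')"
    using card_Un_disjoint[OF finN finP dNP] fin BNP by metis+
  then have cPB: "card (P B) = card (P B')" using cB cNB by simp
  obtain psn where psn: "bij_betw psn (N B) (N B')"
    using finite_same_card_bij[OF finN finN cNB] fin by blast
  obtain psp where psp: "bij_betw psp (P B) (P B')"
    using finite_same_card_bij[OF finP finP cPB] fin by blast
  define ch where "ch c = (if c \<in> A then \<phi> c else if g c c = -1 then psn c else psp c)" for c
  have b1: "bij_betw ch A A'" using phi(1) by (rule bij_betw_cong[THEN iffD1, rotated]) (simp add: ch_def)
  have b2: "bij_betw ch (N B) (N B')" using psn
    by (rule bij_betw_cong[THEN iffD1, rotated]) (use B(1) in \<open>auto simp: ch_def N_def\<close>)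
  have b3: "bij_betw ch (P B) (P B')" using psp
    by (rule bij_betw_cong[THEN iffD1, rotated]) (use B(1) in \<open>auto simp: ch_def P_def\<close>)
  have b23: "bij_betw ch (N B \<union> P B) (N B' \<union> P B')" by (rule bij_betw_combine[OF b2 b3 dNP])
  have "bij_betw ch (A \<union> (N B \<union> P B)) (A' \<union> (N B' \<union> P B'))"
    by (rule bij_betw_combine[OF b1 b23]) (use B'(1) BNP in auto)
  then have bch: "bij_betw ch (A \<union> B) (A' \<union> B')" using BNP by simp
  have sgn: "\<forall>c\<in>A \<union> B. g (ch c) (ch c) = g c c"
  proof
    fix c assume c: "c \<in> A \<union> B"
    show "g (ch c) (ch c) = g c c"
    proof (cases "c \<in> A")
      case True then show ?thesis using phi(2) by (simp add: ch_def)
    next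
      case False
      then have "c \<in> B" using c by simp
      then have "c \<in> N B \<or> c \<in> P B" using BNP by auto
      then show ?thesis
      proof
        assume "c \<in> N B"
        then have "ch c \<in> N B'" "g c c = -1" using bij_betwE[OF b2] unfolding N_def by auto
        then show ?thesis unfolding N_def by simp
      next
        assume "c \<in> P B"
        then have "ch c \<in> P B'" "g c c = 1" using bij_betwE[OF b3] unfolding P_def by auto
        then show ?thesis unfolding P_def by simp
      qed
    qed
  qed
  obtain T where T: "linear T" "\<forall>x\<in>E. \<forall>y\<in>E. g (T x) (T y) = g x y" "T ` E = E" "\<forall>c\<in>A \<union> B. T c = ch c"
    using iso_bases[OF g B(2,4) B'(2,4) bch sgn] by blast
  show ?thesis using T by (intro exI[of _ T]) (auto simp: ch_def)
qed

lemma ext_fam: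
  fixes g :: "'a::euclidean_space \<Rightarrow> 'a \<Rightarrow> real" and u u' :: "nat \<Rightarrow> 'a"
  assumes g: "bilinear g" "\<forall>x y. g x y = g y x"
    and sE: "subspace E" and nd: "\<forall>x\<in>E. (\<forall>y\<in>E. g x y = 0) \<longrightarrow> x = 0"
    and sig: "\<forall>B. B \<subseteq> E \<and> sON g B \<and> span B = E \<longrightarrow> card {b\<in>B. g b b = -1} = \<nu>"
    and I: "finite I" and uE: "\<forall>i\<in>I. u i \<in> E \<and> u' i \<in> E"
    and eps: "\<forall>i\<in>I. \<epsilon> i = 1 \<or> \<epsilon> i = -1"
    and gu: "\<forall>i\<in>I. \<forall>j\<in>I. g (u i) (u j) = (if i = j then \<epsilon> i else 0)"
    and gu': "\<forall>i\<in>I. \<forall>j\<in>I. g (u' i) (u' j) = (if i = j then \<epsilon> i else 0)"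
  shows "\<exists>T. linear T \<and> (\<forall>x\<in>E. \<forall>y\<in>E. g (T x) (T y) = g x y) \<and> T ` E = E \<and> (\<forall>i\<in>I. T (u i) = u' i)"
proof -
  have inj: "inj_on u I" "inj_on u' I"
    by (auto intro!: inj_onI) (metis eps gu zero_neq_one zero_neq_neg_one,
                               metis eps gu' zero_neq_one zero_neq_neg_one)
  have A: "u ` I \<subseteq> E" "sON g (u ` I)" using uE I eps gu unfolding sON_def by auto
  have A': "u' ` I \<subseteq> E" "sON g (u' ` I)" using uE I eps gu' unfolding sON_def by auto
  define \<phi> where "\<phi> = u' \<circ> the_inv_into I u"
  have bij: "bij_betw \<phi> (u ` I) (u' ` I)" unfolding \<phi>_def
    by (rule bij_betw_trans[OF bij_betw_the_inv_into]) (use inj in \<open>auto simp: bij_betw_def\<close>)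
  have phiu: "\<phi> (u i) = u' i" if "i \<in> I" for i
    unfolding \<phi>_def using the_inv_into_f_f[OF inj(1) that] by simp
  have sgn: "\<forall>a\<in>u ` I. g (\<phi> a) (\<phi> a) = g a a" using phiu gu gu' by auto
  obtain T where T: "linear T" "\<forall>x\<in>E. \<forall>y\<in>E. g (T x) (T y) = g x y" "T ` E = E" "\<forall>a\<in>u ` I. T a = \<phi> a"
    using ext_set[OF g sE nd sig A A' bij sgn] by blast
  show ?thesis using T phiu by (intro exI[of _ T]) auto
qed

section \<open>Facts about the Lorentzian decomposition\<close>

lemma W_nd:
  fixes g :: "'a::euclidean_space \<Rightarrow> 'a \<Rightarrow> real"
  assumes L: "lorentzian g" and ods: "orth_direct_sum g W1 W2"
  shows "\<forall>x\<in>W1. (\<forall>y\<in>W1. g x y = 0) \<longrightarrow> x = 0" "\<forall>x\<in>W2. (\<forall>y\<in>W2. g x y = 0) \<longrightarrow> x = 0"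
proof -
  have g: "bilinear g" "\<forall>x y. g x y = g y x" and nd: "\<forall>x. (\<forall>y. g x y = 0) \<longrightarrow> x = 0"
    using L unfolding lorentzian_def by auto
  note d = proj_decomp[OF ods] and s = ods_subspaces[OF ods]
  have split: "g x y = g x (proj1 W1 W2 y) + g x (proj2 W1 W2 y)" for x y
    using d(3)[of y] g(1) by (metis bl_add_r)
  show "\<forall>x\<in>W1. (\<forall>y\<in>W1. g x y = 0) \<longrightarrow> x = 0"
  proof (intro ballI impI)
    fix x assume x: "x \<in> W1" "\<forall>y\<in>W1. g x y = 0"
    have "g x y = 0" for y using split[of x y] x d s(4) by auto
    then show "x = 0" using nd by blast
  qed
  show "\<forall>x\<in>W2. (\<forall>y\<in>W2. g x y = 0) \<longrightarrow> x = 0"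
  proof (intro ballI impI)
    fix x assume x: "x \<in> W2" "\<forall>y\<in>W2. g x y = 0"
    have "g x y = 0" for y using split[of x y] x d s(4)[of "proj1 W1 W2 y" x] g(2) by auto
    then show "x = 0" using nd by blast
  qed
qed

lemma W2_pos:
  fixes g :: "'a::euclidean_space \<Rightarrow> 'a \<Rightarrow> real"
  assumes L: "lorentzian g" and ods: "orth_direct_sum g W1 W2" and tl: "timelike_subspace g W1"
  shows "\<forall>b\<in>W2. b \<noteq> 0 \<longrightarrow> g b b > 0"
proof (intro ballI impI)
  fix b assume b: "b \<in> W2" "b \<noteq> 0"
  obtain e where e: "e \<in> W1" "g e e < 0" using tl unfolding timelike_subspace_def by blast
  have "g e b = 0" using ods_subspaces(4)[OF ods e(1) b(1)] .
  then show "g b b > 0" using timelike_perp_pos[OF L e(2) _ b(2)] by simp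
qed

lemma W1_sig:
  fixes g :: "'a::euclidean_space \<Rightarrow> 'a \<Rightarrow> real"
  assumes L: "lorentzian g" and tl: "timelike_subspace g W1"
  shows "\<forall>B. B \<subseteq> W1 \<and> sON g B \<and> span B = W1 \<longrightarrow> card {b\<in>B. g b b = -1} = 1"
proof (intro allI impI)
  fix B assume B: "B \<subseteq> W1 \<and> sON g B \<and> span B = W1"
  have g: "bilinear g" "\<forall>x y. g x y = g y x" using L unfolding lorentzian_def by auto
  obtain e where e: "e \<in> W1" "g e e < 0" using tl unfolding timelike_subspace_def by blast
  have le: "card {b\<in>B. g b b = -1} \<le> 1" using neg_card_le1[OF L] B by blast
  have "{b\<in>B. g b b = -1} \<noteq> {}"
  proof
    assume none: "{b\<in>B. g b b = -1} = {}"
    have "g e e = (\<Sum>c\<in>B. g c c * (g e c)\<^sup>2)" using sON_quad[OF g, of B e] B e(1) by simp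
    also have "\<dots> \<ge> 0"
    proof (rule sum_nonneg)
      fix c assume "c \<in> B"
      then have "g c c = 1" using none B unfolding sON_def by auto
      then show "g c c * (g e c)\<^sup>2 \<ge> 0" by simp
    qed
    finally show False using e(2) by simp
  qed
  moreover have "finite {b\<in>B. g b b = -1}" using B unfolding sON_def by auto
  ultimately have "card {b\<in>B. g b b = -1} \<ge> 1" by (simp add: Suc_leI card_gt_0_iff)
  then show "card {b\<in>B. g b b = -1} = 1" using le by simp
qed

lemma W2_sig:
  fixes g :: "'a::euclidean_space \<Rightarrow> 'a \<Rightarrow> real"
  assumes pos: "\<forall>b\<in>W2. b \<noteq> 0 \<longrightarrow> g b b > 0" and g: "bilinear g"
  shows "\<forall>B. B \<subseteq> W2 \<and> sON g B \<and> span B = W2 \<longrightarrow> card {b\<in>B. g b b = -1} = 0"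
proof (intro allI impI)
  fix B assume B: "B \<subseteq> W2 \<and> sON g B \<and> span B = W2"
  have "{b\<in>B. g b b = -1} = {}"
  proof (rule ccontr)
    assume "{b\<in>B. g b b = -1} \<noteq> {}"
    then obtain b where b: "b \<in> B" "g b b = -1" by blast
    then have "b \<noteq> 0" using g by (auto simp: bl_zero_l)
    then show False using pos b B by fastforce
  qed
  then show "card {b\<in>B. g b b = -1} = 0" by (metis card.empty)
qed


lemma spectral_onb:
  fixes g h :: "'a::euclidean_space \<Rightarrow> 'a \<Rightarrow> real"
  assumes g: "bilinear g" "\<forall>x y. g x y = g y x" and h: "bilinear h" "\<forall>x y. h x y = h y x"
    and sV: "subspace V" and pos: "\<forall>v\<in>V. v \<noteq> 0 \<longrightarrow> g v v > 0" and dV: "dim V = m"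
  shows "\<exists>eta. orthonormal_basis g V m eta \<and> (\<forall>i<m. \<forall>j<m. i \<noteq> j \<longrightarrow> h (eta i) (eta j) = 0)"
proof -
  obtain D where D: "D \<subseteq> V" "sON g D" "\<forall>c\<in>D. g c c = 1" "span D = V"
      "\<forall>a\<in>D. \<forall>b\<in>D. a \<noteq> b \<longrightarrow> h a b = 0"
    using spectral_set[OF g h sV pos] by blast
  have finD: "finite D" using D(2) unfolding sON_def by auto
  have "card D = dim V" using basis_card_eq_dim[OF D(1) _ sON_indep[OF g(1) D(2)]] D(4) by simp
  then have cD: "card D = m" using dV by simp
  obtain f where f: "bij_betw f {0..<card D} D" using ex_bij_betw_nat_finite[OF finD] by blast
  then have f': "bij_betw f {..<m} D" using cD by (simp add: atLeast0LessThan)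
  have inj: "inj_on f {..<m}" and im: "f ` {..<m} = D" using f' unfolding bij_betw_def by auto
  have "orthonormal_basis g V m f"
    unfolding orthonormal_basis_def
  proof (intro conjI allI impI)
    fix i assume "i < m" then show "f i \<in> V" using im D(1) by auto
  next
    fix i j assume ij: "i < m" "j < m"
    show "g (f i) (f j) = (if i = j then 1 else 0)"
    proof (cases "i = j")
      case True then show ?thesis using D(3) im ij by auto
    next
      case False
      then have "f i \<noteq> f j" using inj ij by (auto dest: inj_onD)
      then show ?thesis using D(2) im ij False unfolding sON_def by auto
    qed
  next
    show "span (f ` {..<m}) = V" using im D(4) by simp
  qed
  moreover have "\<forall>i<m. \<forall>j<m. i \<noteq> j \<longrightarrow> h (f i) (f j) = 0"
    using D(5) im inj by (auto dest: inj_onD)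
  ultimately show ?thesis by blast
qed

lemma order_prod_linear:
  "order c (prod_list (map (\<lambda>i. [:- d i, 1:]) xs)) = length (filter (\<lambda>i. d i = c) xs)"
proof (induction xs)
  case Nil then show ?case by (simp add: order_0I)
next
  case (Cons x xs)
  have nz: "prod_list (map (\<lambda>i. [:- d i, 1:]) xs) \<noteq> 0"
    by (auto simp: prod_list_zero_iff)
  have eq: "prod_list (map (\<lambda>i. [:- d i, 1:]) (x # xs)) = [:- d x, 1:] * prod_list (map (\<lambda>i. [:- d i, 1:]) xs)"
    by simp
  have nz2: "[:- d x, 1:] * prod_list (map (\<lambda>i. [:- d i, 1:]) xs) \<noteq> 0"
    using nz by (metis mult_eq_0_iff pCons_eq_0_iff one_neq_zero)
  have "order c (prod_list (map (\<lambda>i. [:- d i, 1:]) (x # xs)))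
      = order c [:- d x, 1:] + order c (prod_list (map (\<lambda>i. [:- d i, 1:]) xs))"
    unfolding eq by (rule order_mult[OF nz2])
  also have "order c [:- d x, 1:] = (if d x = c then 1 else 0)"
    by (simp add: order_linear')
  finally show ?case using Cons by simp
qed

lemma diag_eigen_mult:
  "eigen_mult (mat m m (\<lambda>(i,j). if i = j then d i else 0)) c = card {i. i < m \<and> d i = c}"
proof -
  let ?M = "mat m m (\<lambda>(i,j). if i = j then d i else 0) :: real mat"
  have M: "?M \<in> carrier_mat m m" by simp
  have ut: "upper_triangular ?M" unfolding upper_triangular_def by auto
  have dm: "diag_mat ?M = map d [0..<m]" unfolding diag_mat_def by auto
  have "char_poly ?M = prod_list (map (\<lambda>i. [:- d i, 1:]) [0..<m])"
    using char_poly_upper_triangular[OF M ut] dm by (simp add: o_def)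
  then have "eigen_mult ?M c = length (filter (\<lambda>i. d i = c) [0..<m])"
    unfolding eigen_mult_def using order_prod_linear by simp
  also have "\<dots> = card {i. i < m \<and> d ([0..<m] ! i) = c}" by (simp add: length_filter_conv_card)
  also have "{i. i < m \<and> d ([0..<m] ! i) = c} = {i. i < m \<and> d i = c}" by auto
  finally show ?thesis .
qed

lemma gram_diag:
  assumes "\<forall>i<m. \<forall>j<m. i \<noteq> j \<longrightarrow> g (f i) (f j) = 0"
  shows "gram g m f = mat m m (\<lambda>(i,j). if i = j then g (f i) (f i) else 0)"
  unfolding gram_def using assms by (intro eq_matI) auto

lemma perm_exists:
  fixes d d' :: "nat \<Rightarrow> real"
  assumes "\<forall>c. card {i. i < m \<and> d i = c} = card {i. i < m \<and> d' i = c}"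
  shows "\<exists>\<sigma>. bij_betw \<sigma> {..<m} {..<m} \<and> (\<forall>i<m. d' (\<sigma> i) = d i)"
proof -
  define F where "F c = (SOME f. bij_betw f {i. i < m \<and> d i = c} {i. i < m \<and> d' i = c})" for c
  have F: "bij_betw (F c) {i. i < m \<and> d i = c} {i. i < m \<and> d' i = c}" for c
  proof -
    have "\<exists>f. bij_betw f {i. i < m \<and> d i = c} {i. i < m \<and> d' i = c}"
      by (rule finite_same_card_bij) (use assms in auto)
    then show ?thesis unfolding F_def by (rule someI_ex)
  qed
  define \<sigma> where "\<sigma> i = F (d i) i" for i
  have s1: "\<sigma> i < m \<and> d' (\<sigma> i) = d i" if "i < m" for i
    using bij_betwE[OF F[of "d i"]] that unfolding \<sigma>_def by auto
  have inj: "inj_on \<sigma> {..<m}"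
  proof (rule inj_onI)
    fix i j assume ij: "i \<in> {..<m}" "j \<in> {..<m}" "\<sigma> i = \<sigma> j"
    then have "d i = d j" using s1 by (metis lessThan_iff)
    then have "F (d i) i = F (d i) j" using ij(3) unfolding \<sigma>_def by simp
    moreover have "inj_on (F (d i)) {k. k < m \<and> d k = d i}" using F bij_betw_def by blast
    ultimately show "i = j" using ij \<open>d i = d j\<close> by (auto dest: inj_onD)
  qed
  have "\<sigma> ` {..<m} \<subseteq> {..<m}" using s1 by auto
  moreover have "card (\<sigma> ` {..<m}) = card {..<m}" using card_image[OF inj] .
  ultimately have "\<sigma> ` {..<m} = {..<m}" by (simp add: card_subset_eq)
  then have "bij_betw \<sigma> {..<m} {..<m}" using inj unfolding bij_betw_def by simp
  then show ?thesis using s1 by blast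
qed

lemma onb_perm:
  assumes "orthonormal_basis g V m eta" "bij_betw \<sigma> {..<m} {..<m}"
  shows "orthonormal_basis g V m (\<lambda>i. eta (\<sigma> i))"
proof -
  have inj: "inj_on \<sigma> {..<m}" and im: "\<sigma> ` {..<m} = {..<m}" using assms(2) unfolding bij_betw_def by auto
  have lt: "\<sigma> i < m" if "i < m" for i using im that by auto
  have "(\<lambda>i. eta (\<sigma> i)) ` {..<m} = eta ` {..<m}" using im by (simp add: image_image[symmetric])
  then show ?thesis using assms(1) lt inj unfolding orthonormal_basis_def
    by (auto dest: inj_onD)
qed

lemma ext_diag:
  fixes g :: "'a::euclidean_space \<Rightarrow> 'a \<Rightarrow> real" and c c' :: "nat \<Rightarrow> 'a"
  assumes g: "bilinear g" "\<forall>x y. g x y = g y x"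
    and sE: "subspace E" and nd: "\<forall>x\<in>E. (\<forall>y\<in>E. g x y = 0) \<longrightarrow> x = 0"
    and sig: "\<forall>B. B \<subseteq> E \<and> sON g B \<and> span B = E \<longrightarrow> card {b\<in>B. g b b = -1} = \<nu>"
    and I: "finite I" and cE: "\<forall>i\<in>I. c i \<in> E \<and> c' i \<in> E"
    and mu: "\<forall>i\<in>I. \<mu> i \<noteq> 0"
    and gc: "\<forall>i\<in>I. \<forall>j\<in>I. g (c i) (c j) = (if i = j then \<mu> i else 0)"
    and gc': "\<forall>i\<in>I. \<forall>j\<in>I. g (c' i) (c' j) = (if i = j then \<mu> i else 0)"
  shows "\<exists>T. linear T \<and> (\<forall>x\<in>E. \<forall>y\<in>E. g (T x) (T y) = g x y) \<and> T ` E = E \<and> (\<forall>i\<in>I. T (c i) = c' i)"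
proof -
  define s where "s i = sqrt \<bar>\<mu> i\<bar>" for i
  have spos: "s i > 0" if "i \<in> I" for i using mu that unfolding s_def by auto
  have ss: "s i * s i = \<bar>\<mu> i\<bar>" for i unfolding s_def by simp
  define u where "u i = (1 / s i) *\<^sub>R c i" for i
  define u' where "u' i = (1 / s i) *\<^sub>R c' i" for i
  define \<epsilon> where "\<epsilon> i = (if \<mu> i > 0 then 1 else -1::real)" for i
  have key: "(1 / s i) * (1 / s i) * \<mu> i = \<epsilon> i" if "i \<in> I" for i
  proof -
    have "(1 / s i) * (1 / s i) * \<mu> i = \<mu> i / \<bar>\<mu> i\<bar>" using ss[of i] by (simp add: field_simps)
    then show ?thesis unfolding \<epsilon>_def using mu that by auto
  qed
  have gu: "\<forall>i\<in>I. \<forall>j\<in>I. g (u i) (u j) = (if i = j then \<epsilon> i else 0)"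
    using gc key g(1) unfolding u_def by (auto simp: bl_scale_l bl_scale_r)
  have gu': "\<forall>i\<in>I. \<forall>j\<in>I. g (u' i) (u' j) = (if i = j then \<epsilon> i else 0)"
    using gc' key g(1) unfolding u'_def by (auto simp: bl_scale_l bl_scale_r)
  have uE: "\<forall>i\<in>I. u i \<in> E \<and> u' i \<in> E" using cE sE unfolding u_def u'_def by (simp add: subspace_scale)
  have eps: "\<forall>i\<in>I. \<epsilon> i = 1 \<or> \<epsilon> i = -1" unfolding \<epsilon>_def by auto
  obtain T where T: "linear T" "\<forall>x\<in>E. \<forall>y\<in>E. g (T x) (T y) = g x y" "T ` E = E" "\<forall>i\<in>I. T (u i) = u' i"
    using ext_fam[OF g sE nd sig I uE eps gu gu'] by blast
  have "T (c i) = c' i" if "i \<in> I" for i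
  proof -
    have "c i = s i *\<^sub>R u i" unfolding u_def using spos[OF that] by simp
    then have "T (c i) = s i *\<^sub>R T (u i)" using linear_scale[OF T(1)] by simp
    also have "\<dots> = s i *\<^sub>R u' i" using T(4) that by simp
    also have "\<dots> = c' i" unfolding u'_def using spos[OF that] by simp
    finally show ?thesis .
  qed
  then show ?thesis using T by blast
qed


lemma zero_of_nondeg:
  fixes g :: "'a::euclidean_space \<Rightarrow> 'a \<Rightarrow> real"
  assumes g: "bilinear g" "\<forall>x y. g x y = g y x"
    and nd: "\<not> degenerate_subspace g (span (a ` {..<m}))"
    and i: "i < m" and orth: "\<forall>j<m. g (a j) (a i) = 0"
  shows "a i = 0"
proof (rule ccontr)
  assume a0: "a i \<noteq> 0"
  have "g (a i) y = 0" if "y \<in> span (a ` {..<m})" for y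
  proof -
    have "g y (a i) = 0" by (rule bl_span_orth[OF g(1) that]) (use orth in auto)
    then show ?thesis using g(2) by metis
  qed
  moreover have "a i \<in> span (a ` {..<m})" using i by (intro span_base) auto
  ultimately show False using nd a0 unfolding degenerate_subspace_def by blast
qed

lemma T1_nondeg:
  fixes g :: "'a::euclidean_space \<Rightarrow> 'a \<Rightarrow> real" and a a' :: "nat \<Rightarrow> 'a"
  assumes L: "lorentzian g" and ods: "orth_direct_sum g W1 W2" and tl: "timelike_subspace g W1"
    and aW: "\<forall>i<m. a i \<in> W1 \<and> a' i \<in> W1"
    and ga: "\<forall>i<m. \<forall>j<m. g (a i) (a j) = (if i = j then lam i else 0)"
    and ga': "\<forall>i<m. \<forall>j<m. g (a' i) (a' j) = (if i = j then lam i else 0)"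
    and nd: "\<not> degenerate_subspace g (span (a ` {..<m}))" "\<not> degenerate_subspace g (span (a' ` {..<m}))"
  shows "\<exists>T1. linear T1 \<and> (\<forall>x\<in>W1. \<forall>y\<in>W1. g (T1 x) (T1 y) = g x y) \<and> T1 ` W1 = W1 \<and> (\<forall>i<m. T1 (a i) = a' i)"
proof -
  have g: "bilinear g" "\<forall>x y. g x y = g y x" using L unfolding lorentzian_def by auto
  let ?I = "{i. i < m \<and> lam i \<noteq> 0}"
  have ex: "\<exists>T. linear T \<and> (\<forall>x\<in>W1. \<forall>y\<in>W1. g (T x) (T y) = g x y) \<and> T ` W1 = W1 \<and> (\<forall>i\<in>?I. T (a i) = a' i)"
  proof (rule ext_diag[OF g ods_subspaces(1)[OF ods] W_nd(1)[OF L ods] W1_sig[OF L tl]])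
    show "finite ?I" by simp
    show "\<forall>i\<in>?I. a i \<in> W1 \<and> a' i \<in> W1" using aW by simp
    show "\<forall>i\<in>?I. lam i \<noteq> 0" by simp
    show "\<forall>i\<in>?I. \<forall>j\<in>?I. g (a i) (a j) = (if i = j then lam i else 0)" using ga by simp
    show "\<forall>i\<in>?I. \<forall>j\<in>?I. g (a' i) (a' j) = (if i = j then lam i else 0)" using ga' by simp
  qed
  then obtain T1 where T1: "linear T1" "\<forall>x\<in>W1. \<forall>y\<in>W1. g (T1 x) (T1 y) = g x y" "T1 ` W1 = W1"
      "\<forall>i\<in>?I. T1 (a i) = a' i" by blast
  have "T1 (a i) = a' i" if i: "i < m" for i
  proof (cases "lam i = 0")
    case True
    have o1: "\<forall>j<m. g (a j) (a i) = 0"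
    proof (intro allI impI)
      fix j assume "j < m" then show "g (a j) (a i) = 0" using ga[rule_format, OF \<open>j < m\<close> i] True by (cases "j = i") auto
    qed
    have o2: "\<forall>j<m. g (a' j) (a' i) = 0"
    proof (intro allI impI)
      fix j assume "j < m" then show "g (a' j) (a' i) = 0" using ga'[rule_format, OF \<open>j < m\<close> i] True by (cases "j = i") auto
    qed
    have "a i = 0" by (rule zero_of_nondeg[OF g nd(1) i o1])
    moreover have "a' i = 0" by (rule zero_of_nondeg[OF g nd(2) i o2])
    ultimately show ?thesis using linear_0[OF T1(1)] by simp
  next
    case False then show ?thesis using T1(4) i by auto
  qed
  then show ?thesis using T1 by blast
qed


lemma indep_of_dim:
  fixes a :: "nat \<Rightarrow> 'a::euclidean_space"
  assumes "dim (span (a ` {..<m})) = m"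
  shows "inj_on a {..<m}" "independent (a ` {..<m})"
proof -
  let ?X = "a ` {..<m}"
  have c1: "card ?X \<le> m" using card_image_le[of "{..<m}" a] by simp
  have "dim (span ?X) \<le> card ?X" by (rule dim_le_card[OF order_refl]) simp
  then have cX: "card ?X = m" using assms c1 by simp
  then show "inj_on a {..<m}" by (intro eq_card_imp_inj_on) auto
  have "independent ?X = (span ?X \<subseteq> span ?X)"
    by (rule card_eq_dim[OF span_superset]) (use cX assms in simp_all)
  then show "independent ?X" by simp
qed

lemma span_image_sum:
  fixes a :: "nat \<Rightarrow> 'a::real_vector"
  assumes "inj_on a {..<m}" "x \<in> span (a ` {..<m})"
  shows "\<exists>k. x = (\<Sum>j<m. k j *\<^sub>R a j)"
proof -
  have sp: "span (a ` {..<m}) = range (\<lambda>u. \<Sum>v\<in>a ` {..<m}. u v *\<^sub>R v)"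
    by (rule span_finite) simp
  have "x \<in> range (\<lambda>u. \<Sum>v\<in>a ` {..<m}. u v *\<^sub>R v)" using assms(2) sp by simp
  then obtain u where "x = (\<Sum>v\<in>a ` {..<m}. u v *\<^sub>R v)" by blast
  also have "\<dots> = (\<Sum>j<m. u (a j) *\<^sub>R a j)" by (rule sum.reindex_cong[OF assms(1)]) auto
  finally have "x = (\<Sum>j<m. u (a j) *\<^sub>R a j)" .
  then show ?thesis by (intro exI[of _ "\<lambda>j. u (a j)"]) simp
qed

lemma deg_structure:
  fixes g :: "'a::euclidean_space \<Rightarrow> 'a \<Rightarrow> real" and a :: "nat \<Rightarrow> 'a"
  assumes L: "lorentzian g"
    and ga: "\<forall>i<m. \<forall>j<m. g (a i) (a j) = (if i = j then lam i else 0)"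
    and dg: "degenerate_subspace g (span (a ` {..<m}))" and dm: "dim (span (a ` {..<m})) = m"
  shows "\<exists>i0<m. lam i0 = 0 \<and> (\<forall>j<m. j \<noteq> i0 \<longrightarrow> lam j \<noteq> 0) \<and> a i0 \<noteq> 0"
proof -
  have g: "bilinear g" "\<forall>x y. g x y = g y x" using L unfolding lorentzian_def by auto
  note ind = indep_of_dim[OF dm]
  have coef: "g (\<Sum>j<m. k j *\<^sub>R a j) (a i) = k i * lam i" if i: "i < m" for k i
  proof -
    have "g (\<Sum>j<m. k j *\<^sub>R a j) (a i) = (\<Sum>j<m. k j * g (a j) (a i))" using g(1) by (simp add: bl_sum_l bl_scale_l)
    also have "\<dots> = (\<Sum>j<m. if j = i then k i * lam i else 0)"
    proof (rule sum.cong[OF refl])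
      fix j assume "j \<in> {..<m}"
      then show "k j * g (a j) (a i) = (if j = i then k i * lam i else 0)" using ga[rule_format, of j i] i by simp
    qed
    also have "\<dots> = k i * lam i" using i by simp
    finally show ?thesis .
  qed
  have "\<exists>i0<m. lam i0 = 0"
  proof (rule ccontr)
    assume "\<not> (\<exists>i0<m. lam i0 = 0)"
    then have nz: "\<forall>i<m. lam i \<noteq> 0" by auto
    obtain x where x: "x \<in> span (a ` {..<m})" "x \<noteq> 0" "\<forall>y\<in>span (a ` {..<m}). g x y = 0"
      using dg unfolding degenerate_subspace_def by blast
    obtain k where k: "x = (\<Sum>j<m. k j *\<^sub>R a j)" using span_image_sum[OF ind(1) x(1)] by blast
    have "k i = 0" if i: "i < m" for i
    proof -
      have "a i \<in> span (a ` {..<m})" using i by (intro span_base) auto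
      then have "g x (a i) = 0" using x(3) by blast
      moreover have "g x (a i) = k i * lam i" unfolding k by (rule coef[OF i])
      ultimately have "k i * lam i = 0" by simp
      then show ?thesis using nz i by simp
    qed
    then have "x = (\<Sum>j<m. 0 *\<^sub>R a j)" unfolding k by (intro sum.cong) auto
    then have "x = 0" by simp
    then show False using x(2) by simp
  qed
  then obtain i0 where i0: "i0 < m" "lam i0 = 0" by blast
  have ai0: "a i0 \<noteq> 0"
  proof
    assume "a i0 = 0"
    then have "0 \<in> a ` {..<m}" using i0(1) by (metis image_eqI lessThan_iff)
    then have "dependent (a ` {..<m})" by (rule dependent_zero)
    then show False using ind(2) by simp
  qed
  have "lam j \<noteq> 0" if j: "j < m" "j \<noteq> i0" for j
  proof
    assume lj: "lam j = 0"
    have "a j \<notin> span {a i0}"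
    proof
      assume "a j \<in> span {a i0}"
      moreover have "{a i0} \<subseteq> a ` {..<m} - {a j}" using i0 j ind(1) by (auto dest: inj_onD)
      then have "span {a i0} \<subseteq> span (a ` {..<m} - {a j})" by (rule span_mono)
      ultimately have "a j \<in> span (a ` {..<m} - {a j})" by (rule subsetD[rotated])
      moreover have "a j \<in> a ` {..<m}" using j by simp
      ultimately have "dependent (a ` {..<m})" unfolding dependent_def by blast
      then show False using ind(2) by simp
    qed
    moreover have "g (a i0) (a i0) = 0" using ga[rule_format, OF i0(1) i0(1)] i0(2) by simp
    moreover have "g (a j) (a j) = 0" using ga[rule_format, OF j(1) j(1)] lj by simp
    moreover have "g (a i0) (a j) = 0" using ga[rule_format, OF i0(1) j(1)] j(2) by simp
    ultimately show False using two_null[OF L _ _ _ ai0] by blast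
  qed
  then show ?thesis using i0 ai0 by blast
qed


lemma partner:
  fixes g :: "'a::euclidean_space \<Rightarrow> 'a \<Rightarrow> real" and a :: "nat \<Rightarrow> 'a"
  assumes L: "lorentzian g" and ods: "orth_direct_sum g W1 W2"
    and n: "n \<in> W1" "n \<noteq> 0" "g n n = 0" and J: "finite J"
    and aW: "\<forall>j\<in>J. a j \<in> W1" and ga: "\<forall>i\<in>J. \<forall>j\<in>J. g (a i) (a j) = (if i = j then lam i else 0)"
    and nz: "\<forall>j\<in>J. lam j \<noteq> 0" and na: "\<forall>j\<in>J. g n (a j) = 0"
  shows "\<exists>k\<in>W1. g k k = 0 \<and> g n k = 1 \<and> (\<forall>j\<in>J. g (a j) k = 0)"
proof -
  have g: "bilinear g" "\<forall>x y. g x y = g y x" using L unfolding lorentzian_def by auto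
  have sW: "subspace W1" using ods_subspaces(1)[OF ods] .
  obtain z where z: "z \<in> W1" "g n z \<noteq> 0" using W_nd(1)[OF L ods] n(1,2) by blast
  define y where "y = z - (\<Sum>j\<in>J. (g (a j) z / lam j) *\<^sub>R a j)"
  have yW: "y \<in> W1" unfolding y_def using z aW sW
    by (intro subspace_diff[OF sW] subspace_sum[OF sW] subspace_scale[OF sW]) auto
  have ny: "g n y = g n z" unfolding y_def using g(1) na by (simp add: bl_diff_r bl_sum_r bl_scale_r)
  have ay: "g (a j') y = 0" if j': "j' \<in> J" for j'
  proof -
    have "g (a j') (\<Sum>j\<in>J. (g (a j) z / lam j) *\<^sub>R a j) = (\<Sum>j\<in>J. (g (a j) z / lam j) * g (a j') (a j))"
      using g(1) by (simp add: bl_sum_r bl_scale_r)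
    also have "\<dots> = (\<Sum>j\<in>J. if j = j' then g (a j') z else 0)"
      using ga j' nz by (intro sum.cong) auto
    also have "\<dots> = g (a j') z" using J j' by simp
    finally show ?thesis unfolding y_def using g(1) by (simp add: bl_diff_r)
  qed
  define k0 where "k0 = (1 / g n y) *\<^sub>R y"
  have nk0: "g n k0 = 1" unfolding k0_def using ny z(2) g(1) by (simp add: bl_scale_r)
  have ak0: "g (a j) k0 = 0" if "j \<in> J" for j unfolding k0_def using ay[OF that] g(1) by (simp add: bl_scale_r)
  define k where "k = k0 - (g k0 k0 / 2) *\<^sub>R n"
  have kW: "k \<in> W1" unfolding k_def k0_def using yW n(1) sW by (simp add: subspace_diff subspace_scale)
  have "g n k = 1" unfolding k_def using nk0 n(3) g(1) by (simp add: bl_diff_r bl_scale_r)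
  moreover have "g k k = 0"
  proof -
    have "g k0 n = 1" using nk0 g(2) by metis
    then show ?thesis unfolding k_def using nk0 n(3) g(1)
      by (simp add: bl_diff_r bl_diff_l bl_scale_r bl_scale_l algebra_simps)
  qed
  moreover have "g (a j) k = 0" if "j \<in> J" for j
  proof -
    have "g (a j) n = 0" using na that g(2) by metis
    then show ?thesis unfolding k_def using ak0[OF that] g(1) by (simp add: bl_diff_r bl_scale_r)
  qed
  ultimately show ?thesis using kW by blast
qed


lemma hyp_facts:
  fixes g :: "'a::real_vector \<Rightarrow> 'a \<Rightarrow> real"
  assumes g: "bilinear g" "\<forall>x y. g x y = g y x" and nk: "g n n = 0" "g k k = 0" "g n k = 1"
  shows "g (n + k) (n + k) = 2" "g (n - k) (n - k) = -2" "g (n + k) (n - k) = 0" "g (n - k) (n + k) = 0"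
proof -
  have kn: "g k n = 1" using nk g(2) by metis
  show "g (n + k) (n + k) = 2" "g (n - k) (n - k) = -2" "g (n + k) (n - k) = 0" "g (n - k) (n + k) = 0"
    using nk kn g(1) by (simp_all add: bl_add_l bl_add_r bl_diff_l bl_diff_r)
qed

lemma perp_facts:
  fixes g :: "'a::real_vector \<Rightarrow> 'a \<Rightarrow> real"
  assumes g: "bilinear g" "\<forall>x y. g x y = g y x" and v: "g v n = 0" "g v k = 0"
  shows "g v (n + k) = 0" "g v (n - k) = 0" "g (n + k) v = 0" "g (n - k) v = 0"
proof -
  have v': "g n v = 0" "g k v = 0" using v g(2) by metis+
  show "g v (n + k) = 0" "g v (n - k) = 0" "g (n + k) v = 0" "g (n - k) v = 0"
    using v v' g(1) by (simp_all add: bl_add_l bl_add_r bl_diff_l bl_diff_r)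
qed

lemma T1_deg:
  fixes g :: "'a::euclidean_space \<Rightarrow> 'a \<Rightarrow> real" and a a' :: "nat \<Rightarrow> 'a"
  assumes L: "lorentzian g" and ods: "orth_direct_sum g W1 W2" and tl: "timelike_subspace g W1"
    and aW: "\<forall>i<m. a i \<in> W1 \<and> a' i \<in> W1"
    and ga: "\<forall>i<m. \<forall>j<m. g (a i) (a j) = (if i = j then lam i else 0)"
    and ga': "\<forall>i<m. \<forall>j<m. g (a' i) (a' j) = (if i = j then lam i else 0)"
    and dg: "degenerate_subspace g (span (a ` {..<m}))" "dim (span (a ` {..<m})) = m"
    and dg': "degenerate_subspace g (span (a' ` {..<m}))" "dim (span (a' ` {..<m})) = m"
  shows "\<exists>T1. linear T1 \<and> (\<forall>x\<in>W1. \<forall>y\<in>W1. g (T1 x) (T1 y) = g x y) \<and> T1 ` W1 = W1 \<and> (\<forall>i<m. T1 (a i) = a' i)"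
proof -
  have g: "bilinear g" "\<forall>x y. g x y = g y x" using L unfolding lorentzian_def by auto
  have sW: "subspace W1" using ods_subspaces(1)[OF ods] .
  obtain i0 where i0: "i0 < m" "lam i0 = 0" "\<forall>j<m. j \<noteq> i0 \<longrightarrow> lam j \<noteq> 0" "a i0 \<noteq> 0"
    using deg_structure[OF L ga dg] by blast
  obtain i1 where i1: "i1 < m" "lam i1 = 0" "a' i1 \<noteq> 0"
    using deg_structure[OF L ga' dg'] by blast
  have "i1 = i0" using i0 i1 by blast
  with i1 have a'0: "a' i0 \<noteq> 0" by simp
  define J where "J = {j. j < m \<and> j \<noteq> i0}"
  have finJ: "finite J" unfolding J_def by simp
  define n where "n = a i0"
  define n' where "n' = a' i0"
  have nW: "n \<in> W1" "n' \<in> W1" using aW i0 unfolding n_def n'_def by auto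
  have nn: "g n n = 0" "g n' n' = 0" using ga ga' i0 unfolding n_def n'_def by auto
  have na: "\<forall>j\<in>J. g n (a j) = 0" "\<forall>j\<in>J. g n' (a' j) = 0"
    using ga ga' i0 unfolding n_def n'_def J_def by auto
  have aJ: "\<forall>j\<in>J. a j \<in> W1" "\<forall>j\<in>J. a' j \<in> W1" using aW unfolding J_def by auto
  have gJ: "\<forall>i\<in>J. \<forall>j\<in>J. g (a i) (a j) = (if i = j then lam i else 0)"
    "\<forall>i\<in>J. \<forall>j\<in>J. g (a' i) (a' j) = (if i = j then lam i else 0)"
    using ga ga' unfolding J_def by auto
  have nzJ: "\<forall>j\<in>J. lam j \<noteq> 0" using i0(3) unfolding J_def by auto
  obtain k where k: "k \<in> W1" "g k k = 0" "g n k = 1" "\<forall>j\<in>J. g (a j) k = 0"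
    using partner[OF L ods nW(1) i0(4)[folded n_def] nn(1) finJ aJ(1) gJ(1) nzJ na(1)] by blast
  obtain k' where k': "k' \<in> W1" "g k' k' = 0" "g n' k' = 1" "\<forall>j\<in>J. g (a' j) k' = 0"
    using partner[OF L ods nW(2) a'0[folded n'_def] nn(2) finJ aJ(2) gJ(2) nzJ na(2)] by blast
  define c where "c i = (if i = i0 then n + k else if i = m then n - k else a i)" for i
  define c' where "c' i = (if i = i0 then n' + k' else if i = m then n' - k' else a' i)" for i
  define \<mu> where "\<mu> i = (if i = i0 then 2 else if i = m then -2 else lam i)" for i
  have im: "i0 \<noteq> m" using i0 by simp
  have cases: "i = i0 \<or> i = m \<or> i \<in> J" if "i \<in> {..m}" for i using that unfolding J_def by auto
  have cJ: "c j = a j" "c' j = a' j" "\<mu> j = lam j" if "j \<in> J" for j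
    using that unfolding c_def c'_def \<mu>_def J_def by auto
  have ci0: "c i0 = n + k" "c' i0 = n' + k'" "\<mu> i0 = 2" unfolding c_def c'_def \<mu>_def by auto
  have cm: "c m = n - k" "c' m = n' - k'" "\<mu> m = -2" unfolding c_def c'_def \<mu>_def using im by auto
  have an: "g (a j) n = 0" "g (a' j) n' = 0" if "j \<in> J" for j using na that g(2) by metis+
  note H = hyp_facts[OF g nn(1) k(2,3)] and H' = hyp_facts[OF g nn(2) k'(2,3)]
  note P = perp_facts[OF g an(1) k(4)[rule_format]] and P' = perp_facts[OF g an(2) k'(4)[rule_format]]
  have J0: "i0 \<notin> J" "m \<notin> J" unfolding J_def by auto
  have gc: "\<forall>i\<in>{..m}. \<forall>j\<in>{..m}. g (c i) (c j) = (if i = j then \<mu> i else 0)"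
  proof (intro ballI)
    fix i j assume i: "i \<in> {..m}" and j: "j \<in> {..m}"
    from cases[OF i] cases[OF j] show "g (c i) (c j) = (if i = j then \<mu> i else 0)"
      using H P gJ(1) cJ ci0 cm im J0 by auto
  qed
  have gc': "\<forall>i\<in>{..m}. \<forall>j\<in>{..m}. g (c' i) (c' j) = (if i = j then \<mu> i else 0)"
  proof (intro ballI)
    fix i j assume i: "i \<in> {..m}" and j: "j \<in> {..m}"
    from cases[OF i] cases[OF j] show "g (c' i) (c' j) = (if i = j then \<mu> i else 0)"
      using H' P' gJ(2) cJ ci0 cm im J0 by auto
  qed
  have cW: "\<forall>i\<in>{..m}. c i \<in> W1 \<and> c' i \<in> W1"
  proof
    fix i assume i: "i \<in> {..m}"
    have "n + k \<in> W1" "n - k \<in> W1" "n' + k' \<in> W1" "n' - k' \<in> W1"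
      using nW k(1) k'(1) sW by (auto simp: subspace_add subspace_diff)
    then show "c i \<in> W1 \<and> c' i \<in> W1" using cases[OF i] cJ ci0 cm aJ by auto
  qed
  have munz: "\<forall>i\<in>{..m}. \<mu> i \<noteq> 0" using cases cJ ci0 cm nzJ by fastforce
  obtain T1 where T1: "linear T1" "\<forall>x\<in>W1. \<forall>y\<in>W1. g (T1 x) (T1 y) = g x y" "T1 ` W1 = W1"
      "\<forall>i\<in>{..m}. T1 (c i) = c' i"
    using ext_diag[OF g sW W_nd(1)[OF L ods] W1_sig[OF L tl] _ cW munz gc gc'] by blast
  have "T1 (a i) = a' i" if i: "i < m" for i
  proof (cases "i = i0")
    case True
    have e1: "T1 (n + k) = n' + k'" using T1(4) ci0 i0(1) by (metis atMost_iff less_imp_le)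
    have e2: "T1 (n - k) = n' - k'" using T1(4) cm by (metis atMost_iff order_refl)
    have "n = (1/2) *\<^sub>R ((n + k) + (n - k))" by (simp add: scaleR_2[symmetric])
    then have "T1 n = (1/2) *\<^sub>R (T1 (n + k) + T1 (n - k))"
      using linear_scale[OF T1(1)] linear_add[OF T1(1)] by metis
    also have "\<dots> = n'" unfolding e1 e2 by (simp add: scaleR_2[symmetric])
    finally show ?thesis using True unfolding n_def n'_def by simp
  next
    case False
    then have "i \<in> J" using i unfolding J_def by simp
    moreover have "i \<in> {..m}" using i by simp
    ultimately show ?thesis using T1(4) cJ[of i] by metis
  qed
  then show ?thesis using T1 by blast
qed


lemma span_proj_image:
  assumes "orthonormal_basis g V m f" "linear P"
  shows "span ((\<lambda>i. P (f i)) ` {..<m}) = P ` V"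
proof -
  have "(\<lambda>i. P (f i)) ` {..<m} = P ` (f ` {..<m})" by auto
  then have "span ((\<lambda>i. P (f i)) ` {..<m}) = P ` span (f ` {..<m})"
    using linear_span_image[OF assms(2)] by simp
  then show ?thesis using assms(1) unfolding orthonormal_basis_def by simp
qed

lemma converse:
  fixes g :: "'a::euclidean_space \<Rightarrow> 'a \<Rightarrow> real"
    and W1 W2 V V' :: "'a set" and m :: nat
  assumes L: "lorentzian g"
    and ods: "orth_direct_sum g W1 W2"
    and tl: "timelike_subspace g W1"
    and spV: "spacelike_subspace g V" and spV': "spacelike_subspace g V'"
    and dV: "dim V = m" and dV': "dim V' = m"
    and xi: "orthonormal_basis g V m xi" and xi': "orthonormal_basis g V' m xi'"
    and cond: "(let S = span ((\<lambda>i. proj1 W1 W2 (xi i)) ` {..<m});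
                   S' = span ((\<lambda>i. proj1 W1 W2 (xi' i)) ` {..<m})
               in (degenerate_subspace g S \<and> dim S = m \<and> degenerate_subspace g S' \<and> dim S' = m)
                  \<or> (\<not> degenerate_subspace g S \<and> \<not> degenerate_subspace g S'))"
    and eig: "same_eigenvalues (gram g m (\<lambda>i. proj1 W1 W2 (xi i)))
                               (gram g m (\<lambda>i. proj1 W1 W2 (xi' i)))"
  shows "\<exists>T. adapted_isometry g W1 W2 T \<and> T ` V = V'"
proof -
  have g: "bilinear g" "\<forall>x y. g x y = g y x" using L unfolding lorentzian_def by auto
  define P1 where "P1 = proj1 W1 W2"
  define P2 where "P2 = proj2 W1 W2"
  have lP1: "linear P1" using proj1_linear[OF ods] unfolding P1_def .
  have lP2: "linear P2" using proj2_linear[OF ods] unfolding P2_def .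
  note dec = proj_decomp[OF ods, folded P1_def P2_def]
  have sW1: "subspace W1" and sW2: "subspace W2" using ods_subspaces[OF ods] by auto
  define h where "h x y = g (P1 x) (P1 y)" for x y
  have h: "bilinear h" "\<forall>x y. h x y = h y x"
    unfolding h_def using bilinear_comp_linear[OF g(1) lP1] g(2) by auto
  have sV: "subspace V" "\<forall>v\<in>V. v \<noteq> 0 \<longrightarrow> g v v > 0" using spV unfolding spacelike_subspace_def by auto
  have sV': "subspace V'" "\<forall>v\<in>V'. v \<noteq> 0 \<longrightarrow> g v v > 0" using spV' unfolding spacelike_subspace_def by auto
  obtain eta where eta: "orthonormal_basis g V m eta" "\<forall>i<m. \<forall>j<m. i \<noteq> j \<longrightarrow> h (eta i) (eta j) = 0"
    using spectral_onb[OF g h sV(1) sV(2) dV] by blast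
  obtain eta0 where eta0: "orthonormal_basis g V' m eta0" "\<forall>i<m. \<forall>j<m. i \<noteq> j \<longrightarrow> h (eta0 i) (eta0 j) = 0"
    using spectral_onb[OF g h sV'(1) sV'(2) dV'] by blast
  define d where "d i = h (eta i) (eta i)" for i
  define d0 where "d0 i = h (eta0 i) (eta0 i)" for i
  have em: "eigen_mult (gram g m (\<lambda>i. P1 (xi i))) c = card {i. i < m \<and> d i = c}" for c
  proof -
    have "char_poly (gram g m (\<lambda>i. P1 (xi i))) = char_poly (gram g m (\<lambda>i. P1 (eta i)))"
      by (rule gram_char_poly_eq[OF g lP1 xi eta(1)])
    moreover have "gram g m (\<lambda>i. P1 (eta i)) = mat m m (\<lambda>(i,j). if i = j then d i else 0)"
      using gram_diag[of m g "\<lambda>i. P1 (eta i)"] eta(2) unfolding d_def h_def by simp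
    ultimately show ?thesis using diag_eigen_mult[of m d c] unfolding eigen_mult_def by simp
  qed
  have em': "eigen_mult (gram g m (\<lambda>i. P1 (xi' i))) c = card {i. i < m \<and> d0 i = c}" for c
  proof -
    have "char_poly (gram g m (\<lambda>i. P1 (xi' i))) = char_poly (gram g m (\<lambda>i. P1 (eta0 i)))"
      by (rule gram_char_poly_eq[OF g lP1 xi' eta0(1)])
    moreover have "gram g m (\<lambda>i. P1 (eta0 i)) = mat m m (\<lambda>(i,j). if i = j then d0 i else 0)"
      using gram_diag[of m g "\<lambda>i. P1 (eta0 i)"] eta0(2) unfolding d0_def h_def by simp
    ultimately show ?thesis using diag_eigen_mult[of m d0 c] unfolding eigen_mult_def by simp
  qed
  have cnt: "\<forall>c. card {i. i < m \<and> d i = c} = card {i. i < m \<and> d0 i = c}"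
    using eig[folded P1_def] em em' unfolding same_eigenvalues_def by simp
  obtain \<sigma> where \<sigma>: "bij_betw \<sigma> {..<m} {..<m}" "\<forall>i<m. d0 (\<sigma> i) = d i"
    using perm_exists[OF cnt] by blast
  define eta' where "eta' i = eta0 (\<sigma> i)" for i
  have eta': "orthonormal_basis g V' m eta'" unfolding eta'_def by (rule onb_perm[OF eta0(1) \<sigma>(1)])
  have slt: "\<sigma> i < m" if "i < m" for i using bij_betwE[OF \<sigma>(1)] that by auto
  have sinj: "inj_on \<sigma> {..<m}" using \<sigma>(1) unfolding bij_betw_def by auto
  have heta': "h (eta' i) (eta' j) = (if i = j then d i else 0)" if "i < m" "j < m" for i j
  proof (cases "i = j")
    case True then show ?thesis using \<sigma>(2) that unfolding eta'_def d0_def by simp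
  next
    case False
    then have "\<sigma> i \<noteq> \<sigma> j" using sinj that by (auto dest: inj_onD)
    then show ?thesis using eta0(2) slt that False unfolding eta'_def by simp
  qed
  define a where "a i = P1 (eta i)" for i
  define a' where "a' i = P1 (eta' i)" for i
  define b where "b i = P2 (eta i)" for i
  define b' where "b' i = P2 (eta' i)" for i
  have ga: "\<forall>i<m. \<forall>j<m. g (a i) (a j) = (if i = j then d i else 0)"
    using eta(2) unfolding a_def d_def h_def by auto
  have ga': "\<forall>i<m. \<forall>j<m. g (a' i) (a' j) = (if i = j then d i else 0)"
    using heta' unfolding a'_def h_def by auto
  have gdec: "g x y = g (P1 x) (P1 y) + g (P2 x) (P2 y)" for x y
    unfolding P1_def P2_def by (rule g_decomp[OF ods g])
  have gb: "\<forall>i<m. \<forall>j<m. g (b i) (b j) = (if i = j then 1 - d i else 0)"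
  proof (intro allI impI)
    fix i j assume ij: "i < m" "j < m"
    have "g (eta i) (eta j) = (if i = j then 1 else 0)" using onb_g[OF eta(1) ij] .
    then show "g (b i) (b j) = (if i = j then 1 - d i else 0)"
      using gdec[of "eta i" "eta j"] ga ij unfolding a_def b_def by auto
  qed
  have gb': "\<forall>i<m. \<forall>j<m. g (b' i) (b' j) = (if i = j then 1 - d i else 0)"
  proof (intro allI impI)
    fix i j assume ij: "i < m" "j < m"
    have "g (eta' i) (eta' j) = (if i = j then 1 else 0)" using onb_g[OF eta' ij] .
    then show "g (b' i) (b' j) = (if i = j then 1 - d i else 0)"
      using gdec[of "eta' i" "eta' j"] ga' ij unfolding a'_def b'_def by auto
  qed
  have aW: "\<forall>i<m. a i \<in> W1 \<and> a' i \<in> W1" unfolding a_def a'_def using dec by auto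
  have bW: "\<forall>i<m. b i \<in> W2 \<and> b' i \<in> W2" unfolding b_def b'_def using dec by auto
  have Seq: "span ((\<lambda>i. proj1 W1 W2 (xi i)) ` {..<m}) = span (a ` {..<m})"
    using span_proj_image[OF xi lP1] span_proj_image[OF eta(1) lP1] unfolding a_def P1_def by simp
  have Seq': "span ((\<lambda>i. proj1 W1 W2 (xi' i)) ` {..<m}) = span (a' ` {..<m})"
    using span_proj_image[OF xi' lP1] span_proj_image[OF eta' lP1] unfolding a'_def P1_def by simp
  have cond': "(degenerate_subspace g (span (a ` {..<m})) \<and> dim (span (a ` {..<m})) = m
       \<and> degenerate_subspace g (span (a' ` {..<m})) \<and> dim (span (a' ` {..<m})) = m)
     \<or> (\<not> degenerate_subspace g (span (a ` {..<m})) \<and> \<not> degenerate_subspace g (span (a' ` {..<m})))"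
    using cond unfolding Let_def Seq Seq' .
  have exT1: "\<exists>T1. linear T1 \<and> (\<forall>x\<in>W1. \<forall>y\<in>W1. g (T1 x) (T1 y) = g x y) \<and> T1 ` W1 = W1 \<and> (\<forall>i<m. T1 (a i) = a' i)"
    using cond'
  proof (elim disjE conjE)
    assume c: "degenerate_subspace g (span (a ` {..<m}))" "dim (span (a ` {..<m})) = m"
       "degenerate_subspace g (span (a' ` {..<m}))" "dim (span (a' ` {..<m})) = m"
    show ?thesis by (rule T1_deg[OF L ods tl aW ga ga' c])
  next
    assume c: "\<not> degenerate_subspace g (span (a ` {..<m}))" "\<not> degenerate_subspace g (span (a' ` {..<m}))"
    show ?thesis by (rule T1_nondeg[OF L ods tl aW ga ga' c])
  qed
  then obtain T1 where T1: "linear T1" "\<forall>x\<in>W1. \<forall>y\<in>W1. g (T1 x) (T1 y) = g x y" "T1 ` W1 = W1"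
      "\<forall>i<m. T1 (a i) = a' i" by blast
  have W2pos: "\<forall>b\<in>W2. b \<noteq> 0 \<longrightarrow> g b b > 0" by (rule W2_pos[OF L ods tl])
  let ?I = "{i. i < m \<and> d i \<noteq> 1}"
  have ex2: "\<exists>T. linear T \<and> (\<forall>x\<in>W2. \<forall>y\<in>W2. g (T x) (T y) = g x y) \<and> T ` W2 = W2 \<and> (\<forall>i\<in>?I. T (b i) = b' i)"
  proof (rule ext_diag[OF g sW2 W_nd(2)[OF L ods] W2_sig[OF W2pos g(1)]])
    show "finite ?I" by simp
    show "\<forall>i\<in>?I. b i \<in> W2 \<and> b' i \<in> W2" using bW by simp
    show "\<forall>i\<in>?I. 1 - d i \<noteq> 0" by simp
    show "\<forall>i\<in>?I. \<forall>j\<in>?I. g (b i) (b j) = (if i = j then 1 - d i else 0)" using gb by simp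
    show "\<forall>i\<in>?I. \<forall>j\<in>?I. g (b' i) (b' j) = (if i = j then 1 - d i else 0)" using gb' by simp
  qed
  then obtain T2 where T2: "linear T2" "\<forall>x\<in>W2. \<forall>y\<in>W2. g (T2 x) (T2 y) = g x y" "T2 ` W2 = W2"
      "\<forall>i\<in>?I. T2 (b i) = b' i" by blast
  have T2b: "T2 (b i) = b' i" if i: "i < m" for i
  proof (cases "d i = 1")
    case True
    have "g (b i) (b i) = 0" "g (b' i) (b' i) = 0" using gb gb' i True by auto
    moreover have "b i \<in> W2" "b' i \<in> W2" using bW i by auto
    ultimately have "b i = 0" "b' i = 0" using W2pos by force+
    then show ?thesis using linear_0[OF T2(1)] by simp
  next
    case False then show ?thesis using T2(4) i by simp
  qed
  define T where "T x = T1 (P1 x) + T2 (P2 x)" for x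
  have l1: "linear (T1 \<circ> P1)" by (rule linear_compose[OF lP1 T1(1)])
  have l2: "linear (T2 \<circ> P2)" by (rule linear_compose[OF lP2 T2(1)])
  have "linear (\<lambda>x. (T1 \<circ> P1) x + (T2 \<circ> P2) x)" by (rule linear_compose_add[OF l1 l2])
  then have lT: "linear T" unfolding T_def o_def .
  have T1W: "T1 (P1 x) \<in> W1" for x
  proof -
    have "T1 (P1 x) \<in> T1 ` W1" using dec(1) by (rule imageI)
    then show ?thesis using T1(3) by simp
  qed
  have T2W: "T2 (P2 x) \<in> W2" for x
  proof -
    have "T2 (P2 x) \<in> T2 ` W2" using dec(2) by (rule imageI)
    then show ?thesis using T2(3) by simp
  qed
  have orth12: "g u v = 0" "g v u = 0" if "u \<in> W1" "v \<in> W2" for u v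
  proof -
    show "g u v = 0" by (rule ods_subspaces(4)[OF ods that])
    then show "g v u = 0" using g(2) by simp
  qed
  have iso: "g (T x) (T y) = g x y" for x y
  proof -
    have "g (T x) (T y) = g (T1 (P1 x)) (T1 (P1 y)) + g (T1 (P1 x)) (T2 (P2 y))
          + g (T2 (P2 x)) (T1 (P1 y)) + g (T2 (P2 x)) (T2 (P2 y))"
      unfolding T_def using g(1) by (simp add: bl_add_l bl_add_r)
    also have "\<dots> = g (P1 x) (P1 y) + g (P2 x) (P2 y)"
      using orth12[OF T1W T2W] T1(2) T2(2) dec(1,2) by simp
    also have "\<dots> = g x y" by (rule gdec[symmetric])
    finally show ?thesis .
  qed
  have TW1: "T ` W1 = W1"
  proof -
    have "T x = T1 x" if "x \<in> W1" for x
      using that proj1_W1[OF ods that] proj2_W1[OF ods that] linear_0[OF T2(1)]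
      unfolding T_def P1_def P2_def by simp
    then have "T ` W1 = T1 ` W1" by (rule image_cong[OF refl])
    then show ?thesis using T1(3) by simp
  qed
  have TW2: "T ` W2 = W2"
  proof -
    have "T x = T2 x" if "x \<in> W2" for x
      using that proj1_W2[OF ods that] proj2_W2[OF ods that] linear_0[OF T1(1)]
      unfolding T_def P1_def P2_def by simp
    then have "T ` W2 = T2 ` W2" by (rule image_cong[OF refl])
    then show ?thesis using T2(3) by simp
  qed
  have Teta: "T (eta i) = eta' i" if "i < m" for i
  proof -
    have "T (eta i) = a' i + b' i" unfolding T_def using T1(4) T2b that unfolding a_def b_def by simp
    also have "\<dots> = eta' i" unfolding a'_def b'_def using dec(3)[of "eta' i"] by simp
    finally show ?thesis .
  qed
  have TV: "T ` V = V'"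
  proof -
    have "T ` V = T ` span (eta ` {..<m})" using eta(1) unfolding orthonormal_basis_def by simp
    also have "\<dots> = span (T ` eta ` {..<m})" using linear_span_image[OF lT] by simp
    also have "T ` eta ` {..<m} = eta' ` {..<m}" using Teta by (auto simp: image_image)
    also have "span (eta' ` {..<m}) = V'" using eta' unfolding orthonormal_basis_def by simp
    finally show ?thesis .
  qed
  have "adapted_isometry g W1 W2 T" unfolding adapted_isometry_def using lT iso TW1 TW2 by blast
  then show ?thesis using TV by blast
qed

theorem proposition4p3:
  fixes g :: "'a::euclidean_space \<Rightarrow> 'a \<Rightarrow> real"
    and W1 W2 V V' :: "'a set" and m :: nat
  assumes "lorentzian g"
    and "orth_direct_sum g W1 W2"
    and "timelike_subspace g W1"
    and "spacelike_subspace g V" and "spacelike_subspace g V'"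
    and "dim V = m" and "dim V' = m"
  shows "((\<exists>T. adapted_isometry g W1 W2 T \<and> T ` V = V') \<longrightarrow>
            (\<forall>xi xi'. orthonormal_basis g V m xi \<and> orthonormal_basis g V' m xi' \<longrightarrow>
               same_eigenvalues (gram g m (\<lambda>i. proj1 W1 W2 (xi i)))
                                (gram g m (\<lambda>i. proj1 W1 W2 (xi' i)))
             \<and> same_eigenvalues (gram g m (\<lambda>i. proj2 W1 W2 (xi i)))
                                (gram g m (\<lambda>i. proj2 W1 W2 (xi' i)))))
       \<and> ((\<exists>xi xi'. orthonormal_basis g V m xi \<and> orthonormal_basis g V' m xi'
            \<and> (let S = span ((\<lambda>i. proj1 W1 W2 (xi i)) ` {..<m});
                   S' = span ((\<lambda>i. proj1 W1 W2 (xi' i)) ` {..<m})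
               in (degenerate_subspace g S \<and> dim S = m \<and> degenerate_subspace g S' \<and> dim S' = m)
                  \<or> (\<not> degenerate_subspace g S \<and> \<not> degenerate_subspace g S'))
            \<and> same_eigenvalues (gram g m (\<lambda>i. proj1 W1 W2 (xi i)))
                               (gram g m (\<lambda>i. proj1 W1 W2 (xi' i))))
          \<longrightarrow> (\<exists>T. adapted_isometry g W1 W2 T \<and> T ` V = V'))"
proof -
  have g: "bilinear g" "\<forall>x y. g x y = g y x" using assms(1) unfolding lorentzian_def by auto
  note F = forward[OF g assms(2)]
  note C = converse[OF assms]
  show ?thesis
    apply (intro conjI)
     apply (intro impI allI)
     apply (elim exE conjE)
     apply (rule F)
          apply assumption+
    apply (intro impI)
    apply (elim exE conjE)
    apply (rule C)
       apply assumption+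
    done
qed


end
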